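(* Let $q\in\mathbb{C}$ with $0<|q|<1$, and let $a,b,c,d,e$ be complex numbers such that at least one of $a$, $b$, $c$ is of the form $q^n$ with $n\in\{1,2,\ldots\}$ (and such that all terms below are well defined). Then \[ \sum_{k=-\infty}^\infty \frac{(q/a,q/b,q/c,q/d,q/e)_k}{(a,bq,cq,dq,eq)_k}(abcdeq^{-1})^k =\frac{(q,ab,bc,ac)_\infty}{(a,bq,cq,abc/q)_\infty} \sum_{k=0}^\infty\frac{(q/a,q/b,q/c,de)_k}{(q,q^2/abc,dq,eq)_k}q^k. \]
   Context: For an integer $n$, the $q$-shifted factorial is $(a)_n=(a;q)_n$ with $(a)_0=1$, $(a)_n=(1-a)(1-aq)\cdots(1-aq^{n-1})$ for $n\ge1$, and $(a)_n=[(1-aq^{-1})(1-aq^{-2})\cdots(1-aq^{n})]^{-1}$ for $n\le -1$. Also $(a_1,\ldots,a_m)_n=(a_1)_n\cdots(a_m)_n$ and $(a_1,\ldots,a_m)_\infty=\lim_{n\to\infty}(a_1,\ldots,a_m)_n$. *)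

theory Defs
  imports "HOL-Analysis.Analysis"
begin

definition qpoch :: "complex \<Rightarrow> complex \<Rightarrow> int \<Rightarrow> complex" where
  "qpoch a q n =
     (if 0 \<le> n then (\<Prod>i<nat n. 1 - a * q ^ i)
      else inverse (\<Prod>i\<in>{1..nat (- n)}. 1 - a / q ^ i))"

definition qpinf :: "complex \<Rightarrow> complex \<Rightarrow> complex" where
  "qpinf a q = lim (\<lambda>n::nat. qpoch a q (int n))"

end

theory Submission
  imports Defs
begin

definition P :: "complex \<Rightarrow> complex \<Rightarrow> nat \<Rightarrow> complex" where
  "P q x n = (\<Prod>i<n. 1 - x*q^i)"

lemma P_0[simp]: "P q x 0 = 1" by (simp add: P_def)
lemma P_Suc: "P q x (Suc n) = P q x n * (1 - x*q^n)" by (simp add: P_def)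
lemma P_Suc2: "P q x (Suc n) = (1-x) * P q (x*q) n"
  by (induction n) (simp_all add: P_Suc mult.assoc mult.left_commute power_commutes)
lemma P_add: "P q x (m+n) = P q x m * P q (x*q^m) n"
  by (induction n) (simp_all add: P_Suc power_add mult.assoc)
lemma P_eq0: "x*q^m = 1 \<Longrightarrow> m < n \<Longrightarrow> P q x n = 0"
  unfolding P_def by (rule prod_zero) auto
lemma P_nz: "(\<And>i. i<n \<Longrightarrow> x*q^i \<noteq> 1) \<Longrightarrow> P q x n \<noteq> 0"
  unfolding P_def by (auto simp: prod_zero_iff)

lemma div_helper:
  fixes I X A B T Z :: complex
  assumes "I \<noteq> 0" "I*X - A*T + B*Z = 0"
  shows "X = A/I*T - B/I*Z"
proof -
  have "X = (A*T - B*Z)/I" using assms by (simp add: field_simps)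
  also have "\<dots> = A/I*T - B/I*Z" by (simp add: diff_divide_distrib)
  finally show ?thesis .
qed

lemma alg1:
  fixes q K I d e Z W T1 T2 :: complex
  assumes nz: "K \<noteq> 0" "I \<noteq> 0" "W \<noteq> 0" and hW: "W = (1-q*I)*(1-d*q*I)*(1-e*q*I)"
    and h1: "K*W*T1 = Z*((q*K-I)*(1-q*q*K*I)*(1-d*e*I))"
    and h2: "K*W*T2 = - (Z*((q*K-I)*(K-I)*(1-d*e*I)*q))"
  shows "T1*((1-d*q*K)*(1-e*q*K)) - T2*((d-q*K)*(e-q*K))
     = (1+q*K)*(1-d*e*q*I)*(I-K)/I*T1 - (1+q*K)*(1-d*e*I)*(I-q*K)/I*Z"
proof -
  have "K*W*(I*(T1*((1-d*q*K)*(1-e*q*K)) - T2*((d-q*K)*(e-q*K)))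
      - (1+q*K)*(1-d*e*q*I)*(I-K)*T1 + (1+q*K)*(1-d*e*I)*(I-q*K)*Z)
    = I*((1-d*q*K)*(1-e*q*K))*(K*W*T1) - I*((d-q*K)*(e-q*K))*(K*W*T2)
      - (1+q*K)*(1-d*e*q*I)*(I-K)*(K*W*T1) + (1+q*K)*(1-d*e*I)*(I-q*K)*Z*K*W"
    by (simp add: algebra_simps)
  also have "\<dots> = I*((1-d*q*K)*(1-e*q*K))*(Z*((q*K-I)*(1-q*q*K*I)*(1-d*e*I))) - I*((d-q*K)*(e-q*K))*(- (Z*((q*K-I)*(K-I)*(1-d*e*I)*q)))
      - (1+q*K)*(1-d*e*q*I)*(I-K)*(Z*((q*K-I)*(1-q*q*K*I)*(1-d*e*I))) + (1+q*K)*(1-d*e*I)*(I-q*K)*Z*K*W"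
    by (simp only: h1 h2)
  also have "\<dots> = 0" unfolding hW by (simp add: algebra_simps)
  finally have "I*(T1*((1-d*q*K)*(1-e*q*K)) - T2*((d-q*K)*(e-q*K)))
      - (1+q*K)*(1-d*e*q*I)*(I-K)*T1 + (1+q*K)*(1-d*e*I)*(I-q*K)*Z = 0"
    using nz by simp
  then show ?thesis using nz(2) by (intro div_helper) (simp_all add: mult.assoc)
qed

definition tS :: "complex \<Rightarrow> complex \<Rightarrow> complex \<Rightarrow> nat \<Rightarrow> nat \<Rightarrow> complex" where
  "tS q d e k j = P q (1/q^k) j * P q (q^(k+1)) j * P q (d*e) j * q^j / (P q q j * P q (d*q) j * P q (e*q) j)"

definition GS :: "complex \<Rightarrow> complex \<Rightarrow> complex \<Rightarrow> nat \<Rightarrow> nat \<Rightarrow> complex" where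
  "GS q d e k j = (case j of 0 \<Rightarrow> 0 | Suc i \<Rightarrow> (1+q*q^k)*(1-d*e*q^i)*(q^i-q*q^k)/q^i * tS q d e (Suc k) i)"

definition qok :: "complex \<Rightarrow> bool" where
  "qok q \<longleftrightarrow> q \<noteq> 0 \<and> (\<forall>n>0. q^n \<noteq> 1)"

lemma qok_pow: "qok q \<Longrightarrow> n > 0 \<Longrightarrow> q^n \<noteq> 1" by (simp add: qok_def)
lemma qok_nz: "qok q \<Longrightarrow> q \<noteq> 0" by (simp add: qok_def)

lemma L1_step:
  assumes q: "qok q" and d: "d \<noteq> 0" and e: "e \<noteq> 0"
    and hd: "\<And>i. d*q^(Suc i) \<noteq> 1" and he: "\<And>i. e*q^(Suc i) \<noteq> 1"
  shows "tS q d e (Suc k) j * ((1-d*q*q^k)*(1-e*q*q^k)) - tS q d e k j * ((d-q*q^k)*(e-q*q^k))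
     = GS q d e k (Suc j) - GS q d e k j"
proof (cases j)
  case 0
  then show ?thesis by (simp add: tS_def GS_def algebra_simps)
next
  case (Suc i)
  have q0: "q \<noteq> 0" using q by (rule qok_nz)
  define K where "K = q^k"
  define I where "I = q^i"
  have K0: "K \<noteq> 0" and I0: "I \<noteq> 0" using q0 by (simp_all add: K_def I_def)
  define W where "W = (1-q*I)*(1-d*q*I)*(1-e*q*I)"
  have w1: "1-q*I \<noteq> 0" using qok_pow[OF q, of "Suc i"] by (simp add: I_def)
  have w2: "1-d*q*I \<noteq> 0" using hd[of i] by (simp add: I_def mult.assoc)
  have w3: "1-e*q*I \<noteq> 0" using he[of i] by (simp add: I_def mult.assoc)
  have W0: "W \<noteq> 0" using w1 w2 w3 by (simp add: W_def)
  have D1: "P q q i \<noteq> 0" by (rule P_nz) (use qok_pow[OF q] in \<open>simp flip: power_Suc\<close>)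
  have D2: "P q (d*q) i \<noteq> 0" by (rule P_nz) (use hd in \<open>simp add: mult.assoc flip: power_Suc\<close>)
  have D3: "P q (e*q) i \<noteq> 0" by (rule P_nz) (use he in \<open>simp add: mult.assoc flip: power_Suc\<close>)
  define Z where "Z = tS q d e (Suc k) i"
  define A1 where "A1 = P q (1/q^(Suc k)) i"
  define A2 where "A2 = P q (q^(Suc k+1)) i"
  define A3 where "A3 = P q (d*e) i"
  define Dd where "Dd = P q q i * P q (d*q) i * P q (e*q) i"
  have Dd0: "Dd \<noteq> 0" using D1 D2 D3 by (simp add: Dd_def)
  have Zd: "Z = A1*A2*A3*I/Dd" by (simp add: Z_def tS_def A1_def A2_def A3_def Dd_def I_def)
  have T1d: "tS q d e (Suc k) (Suc i) = (A1*(1 - I/(q*K)))*(A2*(1-q*q*K*I))*(A3*(1-d*e*I))*(q*I)/(Dd*W)"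
    unfolding tS_def A1_def A2_def A3_def Dd_def W_def K_def I_def P_Suc
    by (simp add: algebra_simps)
  have h1: "K*W*tS q d e (Suc k) (Suc i) = Z*((q*K-I)*(1-q*q*K*I)*(1-d*e*I))"
    unfolding T1d Zd using K0 W0 Dd0 q0 by (simp add: field_simps)
  have e1: "P q (1/q^(Suc k)) (Suc i) * (q*K) = (q*K - 1) * P q (1/q^k) i"
  proof -
    have "P q (1/q^(Suc k)) (Suc i) = (1 - 1/(q*K)) * P q (1/q^k) i"
      unfolding P_Suc2 K_def using q0 by simp
    then show ?thesis using q0 K0 by (simp add: field_simps)
  qed
  have e2: "P q (1/q^(Suc k)) (Suc i) * (q*K) = A1*(q*K - I)"
  proof -
    have "P q (1/q^(Suc k)) (Suc i) = A1 * (1 - I/(q*K))"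
      unfolding P_Suc A1_def K_def I_def by simp
    then show ?thesis using q0 K0 by (simp add: field_simps)
  qed
  have Pk: "P q (1/q^k) i * (q*K - 1) = A1*(q*K - I)"
    using e1 e2 by (simp add: mult.commute)
  have p1: "P q (1/q^k) (Suc i) = P q (1/q^k) i * (1 - I/K)"
    by (simp add: P_Suc K_def I_def)
  have p2: "P q (q^(k+1)) (Suc i) = (1-q*K)*A2"
    by (simp add: P_Suc2 A2_def K_def mult.commute)
  have p3: "P q (d*e) (Suc i) = A3*(1-d*e*I)" by (simp add: P_Suc A3_def I_def)
  have p4: "P q q (Suc i) = P q q i*(1-q*I)" by (simp add: P_Suc I_def mult.commute)
  have p5: "P q (d*q) (Suc i) = P q (d*q) i*(1-d*q*I)" by (simp add: P_Suc I_def mult.assoc)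
  have p6: "P q (e*q) (Suc i) = P q (e*q) i*(1-e*q*I)" by (simp add: P_Suc I_def mult.assoc)
  have T2d: "tS q d e k (Suc i) = (P q (1/q^k) i*(1 - I/K))*((1-q*K)*A2)*(A3*(1-d*e*I))*(q*I)/(Dd*W)"
    unfolding tS_def p1 p2 p3 p4 p5 p6 by (simp add: Dd_def W_def I_def mult_ac)
  have h2: "K*W*tS q d e k (Suc i) = - (Z*((q*K-I)*(K-I)*(1-d*e*I)*q))"
  proof -
    have "K*W*tS q d e k (Suc i) = (P q (1/q^k) i * (q*K - 1)) * (-(K-I)*A2*A3*(1-d*e*I)*q*I/Dd)"
      unfolding T2d using K0 W0 Dd0 q0 by (simp add: field_simps)
    also have "\<dots> = - (Z*((q*K-I)*(K-I)*(1-d*e*I)*q))"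
      unfolding Pk Zd using Dd0 by (simp add: field_simps)
    finally show ?thesis .
  qed
  have "tS q d e (Suc k) (Suc i) * ((1-d*q*K)*(1-e*q*K)) - tS q d e k (Suc i) * ((d-q*K)*(e-q*K))
     = (1+q*K)*(1-d*e*q*I)*(I-K)/I*tS q d e (Suc k) (Suc i) - (1+q*K)*(1-d*e*I)*(I-q*K)/I*Z"
    by (rule alg1[OF K0 I0 W0 W_def h1 h2])
  moreover have "(1+q*K)*(1-d*e*q*I)*(I-K)/I = (1+q*q^k)*(1-d*e*q^(Suc i))*(q^(Suc i)-q*q^k)/q^(Suc i)"
    using q0 by (simp add: K_def I_def field_simps)
  ultimately show ?thesis unfolding Suc GS_def K_def I_def Z_def by simp
qed

lemma L1:
  assumes q: "qok q" and d: "d \<noteq> 0" and e: "e \<noteq> 0"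
    and hd: "\<And>i. d*q^(Suc i) \<noteq> 1" and he: "\<And>i. e*q^(Suc i) \<noteq> 1"
  shows "(\<Sum>j\<le>k. tS q d e k j) = P q (q/d) k * P q (q/e) k * (d*e)^k / (P q (d*q) k * P q (e*q) k)"
proof (induction k)
  case 0
  then show ?case by (simp add: tS_def)
next
  case (Suc k)
  have q0: "q \<noteq> 0" using q by (rule qok_nz)
  define al where "al = (1-d*q*q^k)*(1-e*q*q^k)"
  define c where "c = (d-q*q^k)*(e-q*q^k)"
  have a1: "1-d*q*q^k \<noteq> 0" using hd[of k] by (simp add: mult.assoc)
  have a2: "1-e*q*q^k \<noteq> 0" using he[of k] by (simp add: mult.assoc)
  have al0: "al \<noteq> 0" using a1 a2 by (simp add: al_def)
  have tel: "(\<Sum>j<Suc (Suc k). tS q d e (Suc k) j * al - tS q d e k j * c) = GS q d e k (Suc (Suc k)) - GS q d e k 0"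
  proof -
    have st: "\<And>j. tS q d e (Suc k) j * al - tS q d e k j * c = GS q d e k (Suc j) - GS q d e k j"
      unfolding al_def c_def by (rule L1_step[OF q d e hd he])
    show ?thesis by (simp only: st sum_lessThan_telescope)
  qed
  have G0: "GS q d e k (Suc (Suc k)) = 0" "GS q d e k 0 = 0" by (simp_all add: GS_def)
  have tz: "tS q d e k (Suc k) = 0"
    unfolding tS_def by (simp add: P_eq0[of "1/q^k" q k "Suc k"] q0)
  have "(\<Sum>j<Suc (Suc k). tS q d e (Suc k) j * al - tS q d e k j * c)
     = (\<Sum>j\<le>Suc k. tS q d e (Suc k) j) * al - (\<Sum>j\<le>k. tS q d e k j) * c"
    by (simp add: sum_subtractf sum_distrib_right lessThan_Suc_atMost tz distrib_right)
  with tel G0 have rec: "(\<Sum>j\<le>Suc k. tS q d e (Suc k) j) * al = (\<Sum>j\<le>k. tS q d e k j) * c" by simp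
  define U where "U = P q (q/d) k * P q (q/e) k * (d*e)^k / (P q (d*q) k * P q (e*q) k)"
  have "P q (q/d) (Suc k) * P q (q/e) (Suc k) * (d*e)^(Suc k) / (P q (d*q) (Suc k) * P q (e*q) (Suc k))
      = U * ((1 - q/d*q^k)*(1-q/e*q^k)*(d*e)) / ((1-d*q*q^k)*(1-e*q*q^k))"
    unfolding U_def P_Suc by (simp add: field_simps)
  also have "(1 - q/d*q^k)*(1-q/e*q^k)*(d*e) = c" using d e by (simp add: c_def field_simps)
  finally have "P q (q/d) (Suc k) * P q (q/e) (Suc k) * (d*e)^(Suc k) / (P q (d*q) (Suc k) * P q (e*q) (Suc k))
      = U * c / al" by (simp add: al_def)
  moreover have "(\<Sum>j\<le>Suc k. tS q d e (Suc k) j) = U * c / al"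
  proof -
    have "(\<Sum>j\<le>Suc k. tS q d e (Suc k) j) * al = U * c" using rec Suc.IH unfolding U_def by simp
    then show ?thesis using al0 by (simp add: eq_divide_eq)
  qed
  ultimately show ?case by simp
qed

lemma alg2_poly:
  fixes q X M J x y :: complex
  shows "((1-x*q*M)*(1-y*q*M)*(q*M-J)*(M*x*y-1))*(1-q^3*X^2)*X-(1-x*y*M)*(M*x*y-J)*(1-q^3*X^2)*(1-q^3*M*X)*(M-X)
   -(x*y*M-1)*(1-q^2*X*J)*(x-q^2*X)*(y-q^2*X)*(M-X)*M+(1-q^3*M*X)*(x*y*M-1)*M*(1-x*q*X)*(1-y*q*X)*(J-q*X) = 0"
  by (simp add: algebra_simps power2_eq_square power3_eq_cube)

lemma alg2:
  fixes q X M J x y T0 T1 Tn :: complex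
  assumes X0: "X \<noteq> 0" and q0: "q \<noteq> 0" and c0: "1-q^3*M*X \<noteq> 0"
    and hn: "(q*M-1)*(1-q^2*M)*X*Tn = (1-q^3*M*X)*T1*(M-X)"
    and h0: "(1-q*X*J)*T0*((x-q*X)*(y-q*X)*(q*M-X)) = (1-q^3*M*X)*T1*((1-x*q*X)*(1-y*q*X)*(J-q*X))"
  shows "((1-x*q*M)*(1-y*q*M)*(q*M-J)*(M*x*y-1)) * ((1-q^3*X^2)*T1)
       - ((1-q^2*M)*(1-x*y*M)*(q*M-1)*(M*x*y-J)) * ((1-q^3*X^2)*Tn)
     = T1*((x*y*M-1)*(1-q^2*X*J)*(x-q^2*X)*(y-q^2*X)*(q*M-q*X)*M/(q*X))
       - T0*((x*y*M-1)*(1-q*X*J)*(x-q*X)*(y-q*X)*(q*M-X)*M/X)"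
proof -
  define V where "V = (1-q^3*M*X)*T1"
  have e1: "X*(T1*((x*y*M-1)*(1-q^2*X*J)*(x-q^2*X)*(y-q^2*X)*(q*M-q*X)*M/(q*X)))
      = T1*((x*y*M-1)*(1-q^2*X*J)*(x-q^2*X)*(y-q^2*X)*(M-X)*M)"
    using X0 q0 by (simp add: field_simps)
  have e2: "X*(T0*((x*y*M-1)*(1-q*X*J)*(x-q*X)*(y-q*X)*(q*M-X)*M/X))
      = (x*y*M-1)*M*((1-q*X*J)*T0*((x-q*X)*(y-q*X)*(q*M-X)))"
    using X0 by (simp add: field_simps)
  have "X*(1-q^3*M*X)*(((1-x*q*M)*(1-y*q*M)*(q*M-J)*(M*x*y-1)) * ((1-q^3*X^2)*T1)
       - ((1-q^2*M)*(1-x*y*M)*(q*M-1)*(M*x*y-J)) * ((1-q^3*X^2)*Tn)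
     - (T1*((x*y*M-1)*(1-q^2*X*J)*(x-q^2*X)*(y-q^2*X)*(q*M-q*X)*M/(q*X))
       - T0*((x*y*M-1)*(1-q*X*J)*(x-q*X)*(y-q*X)*(q*M-X)*M/X)))
    = ((1-x*q*M)*(1-y*q*M)*(q*M-J)*(M*x*y-1))*(1-q^3*X^2)*X*((1-q^3*M*X)*T1)
      - (1-x*y*M)*(M*x*y-J)*(1-q^3*X^2)*(1-q^3*M*X)*((q*M-1)*(1-q^2*M)*X*Tn)
      - (1-q^3*M*X)*(X*(T1*((x*y*M-1)*(1-q^2*X*J)*(x-q^2*X)*(y-q^2*X)*(q*M-q*X)*M/(q*X))))
      + (1-q^3*M*X)*(X*(T0*((x*y*M-1)*(1-q*X*J)*(x-q*X)*(y-q*X)*(q*M-X)*M/X)))"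
    by (simp add: algebra_simps)
  also have "\<dots> = ((1-x*q*M)*(1-y*q*M)*(q*M-J)*(M*x*y-1))*(1-q^3*X^2)*X*V
      - (1-x*y*M)*(M*x*y-J)*(1-q^3*X^2)*(1-q^3*M*X)*(V*(M-X))
      - (1-q^3*M*X)*(T1*((x*y*M-1)*(1-q^2*X*J)*(x-q^2*X)*(y-q^2*X)*(M-X)*M))
      + (1-q^3*M*X)*((x*y*M-1)*M*(V*((1-x*q*X)*(1-y*q*X)*(J-q*X))))"
    unfolding e1 e2 hn h0 V_def by (simp add: mult.assoc)
  also have "\<dots> = V*(((1-x*q*M)*(1-y*q*M)*(q*M-J)*(M*x*y-1))*(1-q^3*X^2)*X-(1-x*y*M)*(M*x*y-J)*(1-q^3*X^2)*(1-q^3*M*X)*(M-X)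
   -(x*y*M-1)*(1-q^2*X*J)*(x-q^2*X)*(y-q^2*X)*(M-X)*M+(1-q^3*M*X)*(x*y*M-1)*M*(1-x*q*X)*(1-y*q*X)*(J-q*X))"
    unfolding V_def by (simp add: algebra_simps)
  also have "\<dots> = 0" by (simp only: alg2_poly mult_zero_right)
  finally show ?thesis using X0 c0 by simp
qed

lemma Hrel:
  assumes q0: "q \<noteq> 0"
  shows "P q (1/q^(Suc m)) j * P q (q^(Suc (Suc m))) j * (q^j - q*q^m)
       = P q (1/q^m) j * P q (q^(Suc m)) j * (1 - q*q^m*q^j)"
proof -
  have a1: "P q (1/q^(Suc m)) (Suc j) = P q (1/q^(Suc m)) j * (1 - q^j/(q*q^m))"
    by (simp add: P_Suc)
  have a2: "P q (1/q^(Suc m)) (Suc j) = (1 - 1/(q*q^m)) * P q (1/q^m) j"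
    using q0 by (simp add: P_Suc2)
  have a: "P q (1/q^(Suc m)) j * (q*q^m - q^j) = (q*q^m - 1) * P q (1/q^m) j"
  proof -
    have "P q (1/q^(Suc m)) j * (1 - q^j/(q*q^m)) = (1 - 1/(q*q^m)) * P q (1/q^m) j"
      using a1 a2 by simp
    then show ?thesis using q0 by (simp add: field_simps)
  qed
  have b: "P q (q^(Suc m)) j * (1 - q*q^m*q^j) = (1-q*q^m) * P q (q^(Suc (Suc m))) j"
  proof -
    have "P q (q^(Suc m)) (Suc j) = P q (q^(Suc m)) j * (1 - q*q^m*q^j)" by (simp add: P_Suc)
    moreover have "P q (q^(Suc m)) (Suc j) = (1-q*q^m) * P q (q^(Suc (Suc m))) j"
      by (simp add: P_Suc2 mult.commute)
    ultimately show ?thesis by simp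
  qed
  have "P q (1/q^(Suc m)) j * P q (q^(Suc (Suc m))) j * (q^j - q*q^m)
      = - ((P q (1/q^(Suc m)) j * (q*q^m - q^j)) * P q (q^(Suc (Suc m))) j)"
    by (simp add: algebra_simps)
  also have "\<dots> = P q (1/q^m) j * ((1-q*q^m) * P q (q^(Suc (Suc m))) j)"
    unfolding a by (simp add: algebra_simps)
  also have "\<dots> = P q (1/q^m) j * P q (q^(Suc m)) j * (1 - q*q^m*q^j)"
    unfolding b[symmetric] by (simp add: algebra_simps)
  finally show ?thesis .
qed

definition tV :: "complex \<Rightarrow> complex \<Rightarrow> complex \<Rightarrow> nat \<Rightarrow> nat \<Rightarrow> nat \<Rightarrow> complex" where
  "tV q x y j N k = P q (1/q^N) k * q^(N*k) / P q (q^(N+2)) k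
     * (P q (q/x) k * P q (q/y) k * (x*y)^k / (P q (x*q) k * P q (y*q) k))
     * (P q (1/q^k) j * P q (q^(k+1)) j)"

lemma hn_rel:
  assumes q: "qok q" and hx: "\<And>i. x*q^(Suc i) \<noteq> 1" and hy: "\<And>i. y*q^(Suc i) \<noteq> 1"
  shows "(q*q^N-1)*(1-q^2*q^N)*q^m*tV q x y j N (Suc m) = (1-q^3*q^N*q^m)*tV q x y j (Suc N) (Suc m)*(q^N-q^m)"
proof -
  have q0: "q \<noteq> 0" using q by (rule qok_nz)
  define C where "C = (P q (q/x) (Suc m) * P q (q/y) (Suc m) * (x*y)^(Suc m) / (P q (x*q) (Suc m) * P q (y*q) (Suc m)))
     * (P q (1/q^(Suc m)) j * P q (q^(Suc m+1)) j)"
  define B where "B = P q (q^(N+3)) m"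
  have B0: "B \<noteq> 0" unfolding B_def
    by (rule P_nz) (use qok_pow[OF q] in \<open>simp flip: power_add\<close>)
  have c1: "1-q^3*q^N*q^m \<noteq> 0" using qok_pow[OF q, of "N+m+3"] by (simp add: power_add mult_ac)
  have c2: "1-q^2*q^N \<noteq> 0" using qok_pow[OF q, of "N+2"] by (simp add: power_add mult_ac power2_eq_square)
  have PB1: "P q (q^(Suc N+2)) (Suc m) = B*(1-q^3*q^N*q^m)"
    by (simp add: P_Suc B_def power_add mult_ac power3_eq_cube)
  have PB2: "P q (q^(N+2)) (Suc m) = (1-q^2*q^N)*B"
    by (simp add: P_Suc2 B_def power_add mult_ac power2_eq_square power3_eq_cube)
  have T1: "tV q x y j (Suc N) (Suc m) = P q (1/q^(Suc N)) (Suc m) * q^(Suc N*Suc m) / (B*(1-q^3*q^N*q^m)) * C"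
    unfolding tV_def C_def PB1 by simp
  have Tn: "tV q x y j N (Suc m) = P q (1/q^N) (Suc m) * q^(N*Suc m) / ((1-q^2*q^N)*B) * C"
    unfolding tV_def C_def PB2 by simp
  have i1: "(q*q^N - 1) * P q (1/q^N) (Suc m) = P q (1/q^(Suc N)) (Suc m) * (q*q^N - q*q^m)"
  proof -
    have "P q (1/q^(Suc N)) (Suc (Suc m)) = (1 - 1/(q*q^N)) * P q (1/q^N) (Suc m)"
      using q0 by (simp add: P_Suc2)
    moreover have "P q (1/q^(Suc N)) (Suc (Suc m)) = P q (1/q^(Suc N)) (Suc m) * (1 - q*q^m/(q*q^N))"
      by (simp add: P_Suc)
    ultimately have h: "(1 - 1/(q*q^N)) * P q (1/q^N) (Suc m) = P q (1/q^(Suc N)) (Suc m) * (1 - q*q^m/(q*q^N))"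
      by simp
    have f1: "(1 - 1/(q*q^N)) * (q*q^N) = q*q^N - 1" using q0 by (simp add: field_simps)
    have f2: "(1 - q*q^m/(q*q^N)) * (q*q^N) = q*q^N - q*q^m" using q0 by (simp add: field_simps)
    have "(q*q^N - 1) * P q (1/q^N) (Suc m) = ((1 - 1/(q*q^N)) * P q (1/q^N) (Suc m)) * (q*q^N)"
      unfolding f1[symmetric] by (simp add: mult_ac)
    also have "\<dots> = P q (1/q^(Suc N)) (Suc m) * ((1 - q*q^m/(q*q^N)) * (q*q^N))"
      unfolding h by (simp add: mult_ac)
    finally show ?thesis unfolding f2 .
  qed
  have i2: "q*q^m*q^(N*Suc m) = q^(Suc N*Suc m)"
  proof -
    have "Suc N * Suc m = Suc m + N*Suc m" by simp
    then show ?thesis by (simp only: power_add power_Suc mult.assoc)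
  qed
  have "(q*q^N-1)*(1-q^2*q^N)*q^m*tV q x y j N (Suc m)
      = ((q*q^N - 1) * P q (1/q^N) (Suc m)) * q^m * q^(N*Suc m) / B * C"
    unfolding Tn using c2 B0 by (simp add: field_simps)
  also have "\<dots> = P q (1/q^(Suc N)) (Suc m) * (q^N - q^m) * (q*q^m*q^(N*Suc m)) / B * C"
    unfolding i1 by (simp add: algebra_simps)
  also have "\<dots> = (1-q^3*q^N*q^m)*tV q x y j (Suc N) (Suc m)*(q^N-q^m)"
    unfolding i2 T1 using c1 B0 by (simp add: field_simps)
  finally show ?thesis .
qed

lemma canc3:
  fixes a B c u D1 D2 e1 e2 H k :: complex
  assumes "c\<noteq>0" "e1\<noteq>0" "e2\<noteq>0" "B\<noteq>0" "D1\<noteq>0" "D2\<noteq>0"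
  shows "c * (a/(B*c)*(u/((D1*e1)*(D2*e2)))*H) * (e1*e2*k) = a/B*(u/(D1*D2))*(H*k)"
  using assms by (simp add: field_simps)

lemma h0_rel:
  assumes q: "qok q" and x0: "x \<noteq> 0" and y0: "y \<noteq> 0"
    and hx: "\<And>i. x*q^(Suc i) \<noteq> 1" and hy: "\<And>i. y*q^(Suc i) \<noteq> 1"
  shows "(1-q*q^m*q^j)*tV q x y j (Suc N) m*((x-q*q^m)*(y-q*q^m)*(q*q^N-q^m))
       = (1-q^3*q^N*q^m)*tV q x y j (Suc N) (Suc m)*((1-x*q*q^m)*(1-y*q*q^m)*(q^j-q*q^m))"
proof -
  have q0: "q \<noteq> 0" using q by (rule qok_nz)
  define A where "A = P q (1/q^(Suc N)) m"
  define B where "B = P q (q^(N+3)) m"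
  define Ux where "Ux = P q (q/x) m"
  define Uy where "Uy = P q (q/y) m"
  define Dx where "Dx = P q (x*q) m"
  define Dy where "Dy = P q (y*q) m"
  define E where "E = q^(Suc N*m)"
  define H where "H = P q (1/q^(Suc m)) j * P q (q^(Suc (Suc m))) j"
  define Hm where "Hm = P q (1/q^m) j * P q (q^(Suc m)) j"
  define X where "X = q^m"
  define M where "M = q^N"
  define J where "J = q^j"
  have B0: "B \<noteq> 0" unfolding B_def
    by (rule P_nz) (use qok_pow[OF q] in \<open>simp flip: power_add\<close>)
  have Dx0: "Dx \<noteq> 0" unfolding Dx_def
    by (rule P_nz) (use hx in \<open>simp add: mult.assoc flip: power_Suc\<close>)
  have Dy0: "Dy \<noteq> 0" unfolding Dy_def
    by (rule P_nz) (use hy in \<open>simp add: mult.assoc flip: power_Suc\<close>)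
  have c1: "1-q^3*M*X \<noteq> 0" using qok_pow[OF q, of "N+m+3"] by (simp add: M_def X_def power_add mult_ac)
  have cx: "1-x*q*X \<noteq> 0" using hx[of m] by (simp add: X_def mult_ac)
  have cy: "1-y*q*X \<noteq> 0" using hy[of m] by (simp add: X_def mult_ac)
  have X0: "X \<noteq> 0" "M \<noteq> 0" using q0 by (simp_all add: X_def M_def)
  have HH: "H*(J-q*X) = Hm*(1-q*X*J)"
    unfolding H_def Hm_def J_def X_def using Hrel[OF q0, of m j] by (simp add: mult_ac)
  have T0: "tV q x y j (Suc N) m = A*E/B*(Ux*Uy*(x*y)^m/(Dx*Dy))*Hm"
    unfolding tV_def A_def E_def B_def Ux_def Uy_def Dx_def Dy_def Hm_def
    by (simp add: power_add mult_ac numeral_eq_Suc)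
  have eE: "q^(Suc N*Suc m) = E*(q*M)"
  proof -
    have "Suc N * Suc m = Suc N * m + Suc N" by simp
    then show ?thesis by (simp only: E_def M_def power_add power_Suc mult_ac)
  qed
  have T1: "tV q x y j (Suc N) (Suc m) = (A*(1 - X/(q*M)))*(E*(q*M))/(B*(1-q^3*M*X))
      *((Ux*(1-q*X/x))*(Uy*(1-q*X/y))*((x*y)^m*(x*y))/((Dx*(1-x*q*X))*(Dy*(1-y*q*X))))*H"
    unfolding tV_def eE[symmetric]
    by (simp add: P_Suc A_def B_def Ux_def Uy_def Dx_def Dy_def H_def X_def M_def power_add mult_ac numeral_eq_Suc)
  have f1: "(1 - X/(q*M))*(q*M) = q*M - X" using q0 X0 by (simp add: field_simps)
  have f2: "(1-q*X/x)*(1-q*X/y)*(x*y) = (x-q*X)*(y-q*X)" using x0 y0 by (simp add: field_simps)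
  have "(1-q^3*M*X)*tV q x y j (Suc N) (Suc m)*((1-x*q*X)*(1-y*q*X)*(J-q*X))
      = (A*(1 - X/(q*M)))*(E*(q*M))/B*(((Ux*(1-q*X/x))*(Uy*(1-q*X/y))*((x*y)^m*(x*y)))/(Dx*Dy))*(H*(J-q*X))"
    unfolding T1 by (rule canc3[OF c1 cx cy B0 Dx0 Dy0])
  also have "\<dots> = (A*((1 - X/(q*M))*(q*M)))*E/B*((Ux*Uy*(x*y)^m*((1-q*X/x)*(1-q*X/y)*(x*y)))/(Dx*Dy))*(H*(J-q*X))"
    by (simp add: mult_ac)
  also have "\<dots> = (1-q*X*J)*tV q x y j (Suc N) m*((x-q*X)*(y-q*X)*(q*M-X))"
    unfolding f1 f2 HH T0 by (simp add: mult_ac)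
  finally show ?thesis by (simp add: X_def M_def J_def)
qed

definition tW :: "complex \<Rightarrow> complex \<Rightarrow> complex \<Rightarrow> nat \<Rightarrow> nat \<Rightarrow> nat \<Rightarrow> complex" where
  "tW q x y j N k = (1 - q^(2*k+1)) * tV q x y j N k"
definition GW :: "complex \<Rightarrow> complex \<Rightarrow> complex \<Rightarrow> nat \<Rightarrow> nat \<Rightarrow> nat \<Rightarrow> complex" where
  "GW q x y j N k = (case k of 0 \<Rightarrow> 0 | Suc m \<Rightarrow> tV q x y j (Suc N) m *
     ((x*y*q^N-1)*(1-q*q^m*q^j)*(x-q*q^m)*(y-q*q^m)*(q*q^N-q^m)*q^N/q^m))"
definition alW :: "complex \<Rightarrow> complex \<Rightarrow> complex \<Rightarrow> nat \<Rightarrow> nat \<Rightarrow> complex" where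
  "alW q x y j N = (1-x*q*q^N)*(1-y*q*q^N)*(q*q^N-q^j)*(q^N*x*y-1)"
definition beW :: "complex \<Rightarrow> complex \<Rightarrow> complex \<Rightarrow> nat \<Rightarrow> nat \<Rightarrow> complex" where
  "beW q x y j N = (1-q^2*q^N)*(1-x*y*q^N)*(q*q^N-1)*(q^N*x*y-q^j)"

lemma L2_step:
  assumes q: "qok q" and x0: "x \<noteq> 0" and y0: "y \<noteq> 0"
    and hx: "\<And>i. x*q^(Suc i) \<noteq> 1" and hy: "\<And>i. y*q^(Suc i) \<noteq> 1"
  shows "alW q x y j N * tW q x y j (Suc N) k - beW q x y j N * tW q x y j N k
       = GW q x y j N (Suc k) - GW q x y j N k"
proof (cases k)
  case 0
  have q0: "q \<noteq> 0" using q by (rule qok_nz)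
  show ?thesis
  proof (cases j)
    case 0
    then show ?thesis using \<open>k=0\<close> unfolding alW_def beW_def tW_def GW_def tV_def
      by (simp add: algebra_simps power2_eq_square)
  next
    case (Suc j')
    have "P q 1 j = 0" using Suc by (intro P_eq0[of 1 q 0]) auto
    then show ?thesis using \<open>k=0\<close> unfolding alW_def beW_def tW_def GW_def tV_def by simp
  qed
next
  case (Suc m)
  have q0: "q \<noteq> 0" using q by (rule qok_nz)
  have X0: "q^m \<noteq> 0" using q0 by simp
  have c1: "1-q^3*q^N*q^m \<noteq> 0" using qok_pow[OF q, of "N+m+3"] by (simp add: power_add mult_ac)
  note A2 = alg2[OF X0 q0 c1 hn_rel[OF q hx hy, of N m j] h0_rel[OF q x0 y0 hx hy, of m j N]]
  have p1: "1 - q^(2*Suc m+1) = 1-q^3*(q^m)^2"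
    by (simp add: power_add power_mult power2_eq_square power3_eq_cube mult_ac flip: power_mult_distrib)
  have p2: "(x*y*q^N-1)*(1-q*q^(Suc m)*q^j)*(x-q*q^(Suc m))*(y-q*q^(Suc m))*(q*q^N-q^(Suc m))*q^N/q^(Suc m)
     = (x*y*q^N-1)*(1-q^2*q^m*q^j)*(x-q^2*q^m)*(y-q^2*q^m)*(q*q^N-q*q^m)*q^N/(q*q^m)"
    by (simp add: power2_eq_square mult_ac)
  show ?thesis
    unfolding Suc tW_def GW_def alW_def beW_def nat.case p1 p2
    using A2 by (simp add: mult_ac)
qed

definition Qt :: "complex \<Rightarrow> nat \<Rightarrow> complex" where
  "Qt q n = (\<Prod>i<n. q^(Suc i))"

lemma Qt_0[simp]: "Qt q 0 = 1" by (simp add: Qt_def)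
lemma Qt_Suc: "Qt q (Suc n) = Qt q n * q^(Suc n)" by (simp add: Qt_def)
lemma Qt_sq: "Qt q n * Qt q n = q^(n*n) * q^n"
proof (induction n)
  case 0 then show ?case by simp
next
  case (Suc n)
  have "Qt q (Suc n) * Qt q (Suc n) = (Qt q n * Qt q n) * (q^(Suc n) * q^(Suc n))"
    by (simp add: Qt_Suc mult_ac)
  also have "\<dots> = q^(n*n + n + Suc n + Suc n)" unfolding Suc by (simp add: power_add)
  also have "n*n + n + Suc n + Suc n = Suc n * Suc n + Suc n" by simp
  finally show ?case by (simp add: power_add)
qed

lemma P_rev:
  assumes q0: "q \<noteq> 0" and w0: "w \<noteq> 0"
  shows "P q (w/q^n) n * Qt q n = (-w)^n * P q (q/w) n"
proof (induction n)
  case 0 then show ?case by simp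
next
  case (Suc n)
  have a: "P q (w/q^(Suc n)) (Suc n) = (1 - w/q^(Suc n)) * P q (w/q^n) n"
    using q0 by (simp add: P_Suc2)
  have "P q (w/q^(Suc n)) (Suc n) * Qt q (Suc n) = ((1 - w/q^(Suc n)) * q^(Suc n)) * (P q (w/q^n) n * Qt q n)"
    unfolding a Qt_Suc by (simp add: mult_ac)
  also have "(1 - w/q^(Suc n)) * q^(Suc n) = q^(Suc n) - w" using q0 by (simp add: field_simps)
  also have "(q^(Suc n) - w) * (P q (w/q^n) n * Qt q n) = (-w)^Suc n * P q (q/w) (Suc n)"
    unfolding Suc P_Suc using w0 by (simp add: field_simps)
  finally show ?case .
qed

lemma P_pow_nz: "qok q \<Longrightarrow> 0 < a \<Longrightarrow> P q (q^a) n \<noteq> 0"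
  by (rule P_nz) (metis add_gr_0 power_add qok_pow)

definition RW :: "complex \<Rightarrow> complex \<Rightarrow> complex \<Rightarrow> nat \<Rightarrow> nat \<Rightarrow> complex" where
  "RW q x y j N = P q q (Suc N) * P q (x*y) N * P q (1/q^N) j * P q (q/x) j * P q (q/y) j
     / (P q (x*q) N * P q (y*q) N * P q (q/(q^N*x*y)) j)"

lemma L2_base:
  assumes q: "qok q" and x0: "x \<noteq> 0" and y0: "y \<noteq> 0"
    and hx: "\<And>i. x*q^(Suc i) \<noteq> 1" and hy: "\<And>i. y*q^(Suc i) \<noteq> 1"
    and hb: "P q (q/(q^j*x*y)) j \<noteq> 0"
  shows "tW q x y j j j = RW q x y j j"
proof -
  have q0: "q \<noteq> 0" using q by (rule qok_nz)
  define a where "a = P q (1/q^j) j"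
  define b where "b = P q (q/(q^j*x*y)) j"
  define Qj where "Qj = Qt q j"
  define U where "U = P q (q/x) j * P q (q/y) j / (P q (x*q) j * P q (y*q) j)"
  have Q0: "Qj \<noteq> 0" unfolding Qj_def Qt_def using q0 by simp
  have ha: "a*Qj = (-1)^j * P q q j" using P_rev[OF q0, of 1 j] by (simp add: a_def Qj_def)
  have hb': "b*Qj = (-(q/(x*y)))^j * P q (x*y) j"
    using P_rev[OF q0, of "q/(x*y)" j] x0 y0 q0 by (simp add: b_def Qj_def mult_ac)
  have hQ: "Qj*Qj = q^(j*j)*q^j" unfolding Qj_def by (rule Qt_sq)
  have B0: "P q (q^(j+2)) j \<noteq> 0" by (rule P_pow_nz[OF q]) simp
  have e: "q^(2*j+1) = q^(j+1)*q^j"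
  proof -
    have "2*j+1 = (j+1)+j" by simp
    then show ?thesis by (simp only: power_add)
  qed
  have F1: "P q (q^(j+1)) j * (1-q^(j+1)*q^j) = (1-q^(j+1))*P q (q^(j+2)) j"
  proof -
    have h1: "P q (q^(j+1)) (Suc j) = P q (q^(j+1)) j * (1 - q^(j+1)*q^j)" by (simp only: P_Suc)
    have ee: "q^(j+1)*q = q^(j+2)" by simp
    have h2: "P q (q^(j+1)) (Suc j) = (1-q^(j+1)) * P q (q^(j+2)) j" by (simp only: P_Suc2 ee)
    show ?thesis using h1 h2 by simp
  qed
  have T: "tW q x y j j j = (1-q^(j+1))*a*a*q^(j*j)*((x*y)^j*U)"
  proof -
    have "tW q x y j j j = (P q (q^(j+1)) j * (1-q^(j+1)*q^j)) * a * a * q^(j*j) / P q (q^(j+2)) j * ((x*y)^j*U)"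
      unfolding tW_def tV_def a_def U_def e by (simp add: mult_ac)
    also have "\<dots> = (1-q^(j+1))*a*a*q^(j*j)*((x*y)^j*U)"
      unfolding F1 using B0 by (simp add: field_simps)
    finally show ?thesis .
  qed
  have R: "RW q x y j j = P q q (Suc j) * P q (x*y) j * a * U / b"
    unfolding RW_def a_def b_def U_def by (simp add: field_simps)
  have key: "(1-q^(j+1))*a*a*q^(j*j)*(x*y)^j*b = P q q (Suc j) * P q (x*y) j * a"
  proof -
    have "((1-q^(j+1))*a*a*q^(j*j)*(x*y)^j*b) * (Qj*Qj) = (1-q^(j+1))*a*q^(j*j)*(x*y)^j*((a*Qj)*(b*Qj))"
      by (simp add: mult_ac)
    also have "\<dots> = (1-q^(j+1))*a*q^(j*j)*((-1)^j*(-(q/(x*y)))^j*(x*y)^j)*(P q q j*P q (x*y) j)"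
      unfolding ha hb' by (simp add: mult_ac)
    also have "(-1)^j*(-(q/(x*y)))^j*(x*y)^j = q^j"
    proof -
      have "(-1)*(-(q/(x*y)))*(x*y) = q" using x0 y0 by simp
      then show ?thesis by (metis power_mult_distrib)
    qed
    also have "(1-q^(j+1))*a*q^(j*j)*q^j*(P q q j*P q (x*y) j) = (P q q (Suc j) * P q (x*y) j * a) * (Qj*Qj)"
      unfolding hQ by (simp add: P_Suc mult_ac)
    finally show ?thesis using Q0 by simp
  qed
  have hb0: "b \<noteq> 0" using hb by (simp add: b_def)
  have "(1-q^(j+1))*a*a*q^(j*j)*((x*y)^j*U) = ((1-q^(j+1))*a*a*q^(j*j)*(x*y)^j*b)*U/b"
    using hb0 by simp
  also have "\<dots> = P q q (Suc j) * P q (x*y) j * a * U / b" unfolding key ..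
  finally show ?thesis unfolding T R .
qed

lemma canc4:
  fixes a b A u1 u2 D1 D2 e1 e2 w f g :: complex
  assumes "e1\<noteq>0" "e2\<noteq>0" "D1\<noteq>0" "D2\<noteq>0" "w\<noteq>0"
  shows "(a*b*A*u1*u2/((D1*e1)*(D2*e2)*w))*(e1*e2*f*g) = (a*b*u1*u2/(D1*D2))*(A*f)*g/w"
  using assms by (simp add: field_simps)

lemma RW_rec:
  assumes q: "qok q" and x0: "x \<noteq> 0" and y0: "y \<noteq> 0"
    and hx: "\<And>i. x*q^(Suc i) \<noteq> 1" and hy: "\<And>i. y*q^(Suc i) \<noteq> 1"
    and W1: "P q (q/(q^n*x*y)) j \<noteq> 0" and W2: "P q (q/(q^(Suc n)*x*y)) j \<noteq> 0"
  shows "RW q x y j (Suc n) * alW q x y j n = RW q x y j n * beW q x y j n"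
proof -
  have q0: "q \<noteq> 0" using q by (rule qok_nz)
  define M where "M = q^n"
  define J where "J = q^j"
  define A where "A = P q (1/q^n) j"
  define A' where "A' = P q (1/q^(Suc n)) j"
  define w1 where "w1 = P q (q/(q^n*x*y)) j"
  define w2 where "w2 = P q (q/(q^(Suc n)*x*y)) j"
  define C where "C = P q q (Suc n) * (1-q^2*M) * P q (x*y) n * (1-x*y*M) * P q (q/x) j * P q (q/y) j
      / (P q (x*q) n * P q (y*q) n)"
  have M0: "M \<noteq> 0" using q0 by (simp add: M_def)
  have w10: "w1 \<noteq> 0" using W1 by (simp add: w1_def)
  have w20: "w2 \<noteq> 0" using W2 by (simp add: w2_def)
  have cx: "1-x*q*M \<noteq> 0" using hx[of n] by (simp add: M_def mult_ac)
  have cy: "1-y*q*M \<noteq> 0" using hy[of n] by (simp add: M_def mult_ac)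
  have fA: "A'*(q*M - J) = (q*M - 1)*A"
  proof -
    have h1: "P q (1/q^(Suc n)) (Suc j) = A' * (1 - J/(q*M))" by (simp add: P_Suc A'_def J_def M_def)
    have h2: "P q (1/q^(Suc n)) (Suc j) = (1 - 1/(q*M)) * A" using q0 by (simp add: P_Suc2 A_def M_def)
    have f1: "(1 - J/(q*M))*(q*M) = q*M - J" using q0 M0 by (simp add: field_simps)
    have f2: "(1 - 1/(q*M))*(q*M) = q*M - 1" using q0 M0 by (simp add: field_simps)
    have "A'*(q*M - J) = (A' * (1 - J/(q*M))) * (q*M)" unfolding f1[symmetric] by (simp add: mult_ac)
    also have "\<dots> = ((1 - 1/(q*M)) * A) * (q*M)" using h1 h2 by simp
    also have "\<dots> = (q*M - 1)*A" unfolding f2[symmetric] by (simp add: mult_ac)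
    finally show ?thesis .
  qed
  have fW: "w2*(M*x*y - J) = (M*x*y - 1)*w1"
  proof -
    define w where "w = q/(q^(Suc n)*x*y)"
    have wq: "w*q = q/(q^n*x*y)" using q0 by (simp add: w_def field_simps)
    have h1: "P q w (Suc j) = w2 * (1 - w*J)" by (simp add: P_Suc w2_def w_def J_def)
    have h2: "P q w (Suc j) = (1 - w) * w1" by (simp add: P_Suc2 wq w1_def)
    have f1: "(1 - w*J) * (M*x*y) = M*x*y - J" using q0 x0 y0 by (simp add: w_def M_def field_simps)
    have f2: "(1 - w) * (M*x*y) = M*x*y - 1" using q0 x0 y0 by (simp add: w_def M_def field_simps)
    have "w2*(M*x*y - J) = (w2 * (1 - w*J)) * (M*x*y)" unfolding f1[symmetric] by (simp add: mult_ac)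
    also have "\<dots> = ((1 - w) * w1) * (M*x*y)" using h1 h2 by simp
    also have "\<dots> = (M*x*y - 1)*w1" unfolding f2[symmetric] by (simp add: mult_ac)
    finally show ?thesis .
  qed
  have Dx0: "P q (x*q) n \<noteq> 0" by (rule P_nz) (use hx in \<open>simp add: mult.assoc flip: power_Suc\<close>)
  have Dy0: "P q (y*q) n \<noteq> 0" by (rule P_nz) (use hy in \<open>simp add: mult.assoc flip: power_Suc\<close>)
  have RS: "RW q x y j (Suc n) = (P q q (Suc n) * (1-q^2*M)) * (P q (x*y) n * (1-x*y*M)) * A' * P q (q/x) j * P q (q/y) j
      / ((P q (x*q) n * (1-x*q*M)) * (P q (y*q) n * (1-y*q*M)) * w2)"
    unfolding RW_def A'_def w2_def M_def by (simp add: P_Suc power2_eq_square mult_ac)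
  have L: "RW q x y j (Suc n) * alW q x y j n = C*(A'*(q*M-J))*(M*x*y-1)/w2"
  proof -
    have al: "alW q x y j n = (1-x*q*M)*(1-y*q*M)*(q*M-J)*(M*x*y-1)" by (simp add: alW_def M_def J_def mult_ac)
    have "RW q x y j (Suc n) * alW q x y j n = (P q q (Suc n) * (1-q^2*M)) * (P q (x*y) n * (1-x*y*M)) * A' * P q (q/x) j * P q (q/y) j
      / ((P q (x*q) n * (1-x*q*M)) * (P q (y*q) n * (1-y*q*M)) * w2) * ((1-x*q*M)*(1-y*q*M)*(q*M-J)*(M*x*y-1))"
      by (simp only: RS al)
    also have "\<dots> = ((P q q (Suc n) * (1-q^2*M)) * (P q (x*y) n * (1-x*y*M)) * P q (q/x) j * P q (q/y) j / (P q (x*q) n * P q (y*q) n))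
        * (A'*(q*M-J))*(M*x*y-1)/w2"
      by (rule canc4[OF cx cy Dx0 Dy0 w20])
    also have "\<dots> = C*(A'*(q*M-J))*(M*x*y-1)/w2" by (simp only: C_def mult.assoc)
    finally show ?thesis .
  qed
  have R: "RW q x y j n * beW q x y j n = C*((q*M-1)*A)*(M*x*y-J)/w1"
    unfolding RW_def beW_def C_def A_def w1_def M_def J_def using Dx0 Dy0 w10
    by (simp add: field_simps w1_def)
  have E: "(M*x*y-1)/w2 = (M*x*y-J)/w1" using fW w10 w20 by (simp add: field_simps)
  have "C*(A'*(q*M-J))*(M*x*y-1)/w2 = C*((q*M-1)*A)*((M*x*y-1)/w2)" by (simp add: fA)
  also have "\<dots> = C*((q*M-1)*A)*((M*x*y-J)/w1)" by (simp only: E)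
  also have "\<dots> = C*((q*M-1)*A)*(M*x*y-J)/w1" by simp
  finally show ?thesis unfolding L R .
qed

lemma W_nz:
  assumes q: "qok q" and hxy: "\<And>i. x*y*q^N0 \<noteq> q^(Suc i)" and nN: "n \<le> N0"
  shows "P q (q/(q^n*x*y)) j \<noteq> 0"
proof (rule P_nz)
  fix i assume "i < j"
  have q0: "q \<noteq> 0" using q by (rule qok_nz)
  show "q/(q^n*x*y)*q^i \<noteq> 1"
  proof
    assume h: "q/(q^n*x*y)*q^i = 1"
    then have xy0: "q^n*x*y \<noteq> 0" by auto
    then have "q^(Suc i) = q^n*x*y" using h by (simp add: field_simps)
    then have "x*y*q^N0 = q^(Suc i)*q^(N0-n)"
      using nN by (simp add: mult_ac flip: power_add)
    also have "\<dots> = q^(Suc (i + (N0-n)))" by (simp add: power_add)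
    finally show False using hxy by blast
  qed
qed

lemma alW_nz:
  assumes q: "qok q" and hx: "\<And>i. x*q^(Suc i) \<noteq> 1" and hy: "\<And>i. y*q^(Suc i) \<noteq> 1"
    and hxy: "\<And>i. x*y*q^N0 \<noteq> q^(Suc i)" and nN: "n < N0" and jn: "j \<le> n"
  shows "alW q x y j n \<noteq> 0"
proof -
  have q0: "q \<noteq> 0" using q by (rule qok_nz)
  have a1: "1-x*q*q^n \<noteq> 0" using hx[of n] by (simp add: mult_ac)
  have a2: "1-y*q*q^n \<noteq> 0" using hy[of n] by (simp add: mult_ac)
  have a3: "q*q^n - q^j \<noteq> 0"
  proof
    assume "q*q^n - q^j = 0"
    then have "q^j * q^(Suc n - j) = q^j * 1" using jn by (simp flip: power_add)
    then have "q^(Suc n - j) = 1" using q0 by simp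
    then show False using qok_pow[OF q, of "Suc n - j"] jn by simp
  qed
  have a4: "q^n*x*y - 1 \<noteq> 0"
  proof
    assume "q^n*x*y - 1 = 0"
    then have "x*y*q^N0 = q^(N0-n)" using nN by (simp add: mult_ac power_add[symmetric] algebra_simps
        flip: power_add) (metis le_add_diff_inverse less_imp_le mult.assoc mult.commute mult_1 power_add)
    also have "\<dots> = q^(Suc (N0-n-1))"
    proof -
      have "N0-n = Suc (N0-n-1)" using nN by simp
      then show ?thesis by (rule arg_cong)
    qed
    finally show False using hxy by blast
  qed
  show ?thesis unfolding alW_def using a1 a2 a3 a4 by simp
qed

lemma L2:
  assumes q: "qok q" and x0: "x \<noteq> 0" and y0: "y \<noteq> 0"
    and hx: "\<And>i. x*q^(Suc i) \<noteq> 1" and hy: "\<And>i. y*q^(Suc i) \<noteq> 1"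
    and hxy: "\<And>i. x*y*q^N0 \<noteq> q^(Suc i)" and jN: "j \<le> N" and NN0: "N \<le> N0"
  shows "(\<Sum>k\<le>N. tW q x y j N k) = RW q x y j N"
  using jN NN0
proof (induction N rule: dec_induct)
  case base
  have q0: "q \<noteq> 0" using q by (rule qok_nz)
  have z: "\<And>k. k < j \<Longrightarrow> tW q x y j j k = 0"
    unfolding tW_def tV_def using q0 by (simp add: P_eq0[of "1/q^_" q _ j])
  have "(\<Sum>k\<le>j. tW q x y j j k) = tW q x y j j j"
    by (subst sum.remove[of _ j]) (auto intro!: sum.neutral z)
  also have "\<dots> = RW q x y j j"
    by (rule L2_base[OF q x0 y0 hx hy W_nz[OF q hxy base]])
  finally show ?case .
next
  case (step n)
  have q0: "q \<noteq> 0" using q by (rule qok_nz)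
  have tel: "(\<Sum>k<Suc (Suc n). alW q x y j n * tW q x y j (Suc n) k - beW q x y j n * tW q x y j n k)
       = GW q x y j n (Suc (Suc n)) - GW q x y j n 0"
  proof -
    have st: "\<And>k. alW q x y j n * tW q x y j (Suc n) k - beW q x y j n * tW q x y j n k
       = GW q x y j n (Suc k) - GW q x y j n k"
      by (rule L2_step[OF q x0 y0 hx hy])
    show ?thesis by (simp only: st sum_lessThan_telescope)
  qed
  have G0: "GW q x y j n (Suc (Suc n)) = 0" "GW q x y j n 0 = 0" by (simp_all add: GW_def)
  have tz: "tW q x y j n (Suc n) = 0"
    unfolding tW_def tV_def by (simp add: P_eq0[of "1/q^n" q n "Suc n"] q0)
  have "(\<Sum>k<Suc (Suc n). alW q x y j n * tW q x y j (Suc n) k - beW q x y j n * tW q x y j n k)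
     = alW q x y j n * (\<Sum>k\<le>Suc n. tW q x y j (Suc n) k) - beW q x y j n * (\<Sum>k\<le>n. tW q x y j n k)"
    by (simp add: sum_subtractf sum_distrib_left lessThan_Suc_atMost tz distrib_left)
  have IH: "(\<Sum>k\<le>n. tW q x y j n k) = RW q x y j n" using step.IH step.prems by simp
  with tel G0 have rec: "alW q x y j n * (\<Sum>k\<le>Suc n. tW q x y j (Suc n) k) = beW q x y j n * RW q x y j n"
    by (metis (no_types, lifting) \<open>(\<Sum>k<Suc (Suc n). alW q x y j n * tW q x y j (Suc n) k - beW q x y j n * tW q x y j n k)
     = alW q x y j n * (\<Sum>k\<le>Suc n. tW q x y j (Suc n) k) - beW q x y j n * (\<Sum>k\<le>n. tW q x y j n k)\<close> diff_zero eq_iff_diff_eq_0)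
  have nN0: "n < N0" using step by simp
  have al0: "alW q x y j n \<noteq> 0" by (rule alW_nz[OF q hx hy hxy nN0 step.hyps(1)])
  have rr: "RW q x y j (Suc n) * alW q x y j n = RW q x y j n * beW q x y j n"
    by (rule RW_rec[OF q x0 y0 hx hy W_nz[OF q hxy] W_nz[OF q hxy]]) (use step in simp_all)
  show ?case using rec rr al0 by (metis mult.commute mult_left_cancel)
qed

lemma watson:
  assumes q: "qok q" and x0: "x \<noteq> 0" and y0: "y \<noteq> 0" and d0: "d \<noteq> 0" and e0: "e \<noteq> 0"
    and hx: "\<And>i. x*q^(Suc i) \<noteq> 1" and hy: "\<And>i. y*q^(Suc i) \<noteq> 1"
    and hd: "\<And>i. d*q^(Suc i) \<noteq> 1" and he: "\<And>i. e*q^(Suc i) \<noteq> 1"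
    and hxy: "\<And>i. x*y*q^N \<noteq> q^(Suc i)"
  shows "(\<Sum>m\<le>N. (1-q^(2*m+1)) * (P q (1/q^N) m * q^(N*m) / P q (q^(N+2)) m)
            * (P q (q/x) m * P q (q/y) m * (x*y)^m / (P q (x*q) m * P q (y*q) m))
            * (P q (q/d) m * P q (q/e) m * (d*e)^m / (P q (d*q) m * P q (e*q) m)))
       = P q q (Suc N) * P q (x*y) N / (P q (x*q) N * P q (y*q) N)
         * (\<Sum>j\<le>N. P q (1/q^N) j * P q (q/x) j * P q (q/y) j * P q (d*e) j
              / (P q q j * P q (q/(q^N*x*y)) j * P q (d*q) j * P q (e*q) j) * q^j)"
proof -
  define D where "D j = P q (d*e) j * q^j / (P q q j * P q (d*q) j * P q (e*q) j)" for j
  define c where "c m = (1-q^(2*m+1)) * (P q (1/q^N) m * q^(N*m) / P q (q^(N+2)) m)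
            * (P q (q/x) m * P q (q/y) m * (x*y)^m / (P q (x*q) m * P q (y*q) m))" for m
  have cS: "c m * tS q d e m j = tW q x y j N m * D j" for m j
    unfolding c_def tS_def tW_def tV_def D_def by (simp add: mult_ac)
  have zz: "tW q x y j N m = 0" if "m < j" for m j
    unfolding tW_def tV_def using qok_nz[OF q] that by (simp add: P_eq0[of "1/q^m" q m j])
  have "(\<Sum>m\<le>N. c m * (P q (q/d) m * P q (q/e) m * (d*e)^m / (P q (d*q) m * P q (e*q) m)))
      = (\<Sum>m\<le>N. c m * (\<Sum>j\<le>m. tS q d e m j))"
    by (simp add: L1[OF q d0 e0 hd he])
  also have "\<dots> = (\<Sum>m\<le>N. \<Sum>j\<le>N. tW q x y j N m * D j)"
  proof (rule sum.cong[OF refl])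
    fix m assume "m \<in> {..N}"
    then have mN: "m \<le> N" by simp
    have "c m * (\<Sum>j\<le>m. tS q d e m j) = (\<Sum>j\<le>m. tW q x y j N m * D j)"
      by (simp add: sum_distrib_left cS)
    also have "\<dots> = (\<Sum>j\<le>N. tW q x y j N m * D j)"
      by (rule sum.mono_neutral_left) (use mN zz in auto)
    finally show "c m * (\<Sum>j\<le>m. tS q d e m j) = (\<Sum>j\<le>N. tW q x y j N m * D j)" .
  qed
  also have "\<dots> = (\<Sum>j\<le>N. (\<Sum>m\<le>N. tW q x y j N m) * D j)"
    by (subst sum.swap) (simp add: sum_distrib_right)
  also have "\<dots> = (\<Sum>j\<le>N. RW q x y j N * D j)"
    by (rule sum.cong[OF refl]) (simp add: L2[OF q x0 y0 hx hy hxy])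
  also have "\<dots> = P q q (Suc N) * P q (x*y) N / (P q (x*q) N * P q (y*q) N)
         * (\<Sum>j\<le>N. P q (1/q^N) j * P q (q/x) j * P q (q/y) j * P q (d*e) j
              / (P q q j * P q (q/(q^N*x*y)) j * P q (d*q) j * P q (e*q) j) * q^j)"
    unfolding sum_distrib_left by (rule sum.cong[OF refl]) (simp add: RW_def D_def mult_ac)
  finally show ?thesis unfolding c_def by (simp add: mult_ac)
qed

lemma qpoch_nat: "qpoch x q (int n) = P q x n" by (simp add: qpoch_def P_def)

lemma qpoch_neg: "qpoch x q (- int n) = inverse (\<Prod>i\<in>{1..n}. 1 - x/q^i)"
proof (cases "n = 0")
  case True then show ?thesis by (simp add: qpoch_def)
next
  case False
  then have h1: "\<not> (0 \<le> - int n)" by simp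
  have h2: "nat (- (- int n)) = n" by simp
  show ?thesis unfolding qpoch_def if_not_P[OF h1] h2 ..
qed

lemma qpinf_alt: "qpinf x q = lim (\<lambda>n. P q x n)" by (simp add: qpinf_def qpoch_nat)

lemma P_conv_nz:
  assumes nq: "norm q < 1" and nz: "\<And>i. x*q^i \<noteq> 1"
  shows "\<exists>L. (\<lambda>n. P q x n) \<longlonglongrightarrow> L \<and> L \<noteq> 0"
proof -
  define f where "f i = 1 - x*q^i" for i
  have f0: "\<And>i. f i \<noteq> 0" using nz by (simp add: f_def)
  have "summable (\<lambda>i. norm (f i - 1))"
  proof -
    have "summable (\<lambda>i. norm x * norm q ^ i)"
      using nq by (intro summable_mult summable_geometric) simp
    then show ?thesis by (simp add: f_def norm_mult norm_power)
  qed
  then have "convergent_prod f"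
    by (intro abs_convergent_prod_imp_convergent_prod summable_imp_abs_convergent_prod)
  then obtain L where L: "(\<lambda>n. \<Prod>i\<le>n. f i) \<longlonglongrightarrow> L" "L \<noteq> 0"
    using convergent_prod_iff_nz_lim[where f=f] f0 by blast
  have "(\<lambda>n. P q x (Suc n)) \<longlonglongrightarrow> L"
    using L(1) by (simp add: P_def f_def lessThan_Suc_atMost)
  then have "(\<lambda>n. P q x n) \<longlonglongrightarrow> L" by (rule LIMSEQ_imp_Suc)
  with L(2) show ?thesis by blast
qed

lemma P_lim:
  assumes nq: "norm q < 1"
  shows "(\<lambda>n. P q x n) \<longlonglongrightarrow> qpinf x q"
proof (cases "\<exists>i. x*q^i = 1")
  case True
  then obtain i where i: "x*q^i = 1" by blast
  have "(\<lambda>n. P q x (n + Suc i)) \<longlonglongrightarrow> 0"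
    using P_eq0[OF i] by simp
  then have t: "(\<lambda>n. P q x n) \<longlonglongrightarrow> 0" by (rule LIMSEQ_offset)
  then have "qpinf x q = 0" unfolding qpinf_alt by (rule limI)
  with t show ?thesis by simp
next
  case False
  then obtain L where L: "(\<lambda>n. P q x n) \<longlonglongrightarrow> L" using P_conv_nz[OF nq] by blast
  then have "qpinf x q = L" unfolding qpinf_alt by (rule limI)
  with L show ?thesis by simp
qed

lemma qpinf_nz:
  assumes nq: "norm q < 1" and nz: "\<And>i. x*q^i \<noteq> 1"
  shows "qpinf x q \<noteq> 0"
proof -
  obtain L where L: "(\<lambda>n. P q x n) \<longlonglongrightarrow> L" "L \<noteq> 0" using P_conv_nz[OF nq nz] by blast
  then have "qpinf x q = L" unfolding qpinf_alt by (intro limI)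
  with L show ?thesis by simp
qed

lemma qpinf_shift:
  assumes nq: "norm q < 1"
  shows "qpinf x q = P q x m * qpinf (x*q^m) q"
proof -
  have "(\<lambda>n. P q x m * P q (x*q^m) n) \<longlonglongrightarrow> P q x m * qpinf (x*q^m) q"
    by (intro tendsto_mult tendsto_const P_lim[OF nq])
  have "(\<lambda>n. P q x (n + m)) \<longlonglongrightarrow> P q x m * qpinf (x*q^m) q"
  proof -
    have "\<And>n. P q x (n+m) = P q x m * P q (x*q^m) n" by (metis P_add add.commute)
    then show ?thesis using \<open>(\<lambda>n. P q x m * P q (x*q^m) n) \<longlonglongrightarrow> P q x m * qpinf (x*q^m) q\<close> by simp
  qed
  then have "(\<lambda>n. P q x n) \<longlonglongrightarrow> P q x m * qpinf (x*q^m) q" by (rule LIMSEQ_offset)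
  moreover have "(\<lambda>n. P q x n) \<longlonglongrightarrow> qpinf x q" by (rule P_lim[OF nq])
  ultimately show ?thesis using LIMSEQ_unique by blast
qed

definition Rn :: "complex \<Rightarrow> complex \<Rightarrow> nat \<Rightarrow> complex" where
  "Rn q x n = (\<Prod>i\<in>{1..n}. 1 - x/q^i)"

lemma Rn_eq:
  assumes q0: "q \<noteq> 0" and x0: "x \<noteq> 0"
  shows "Rn q x n * Qt q n = (-x)^n * P q (q/x) n"
proof (induction n)
  case 0 then show ?case by (simp add: Rn_def)
next
  case (Suc n)
  have a: "Rn q x (Suc n) = Rn q x n * (1 - x/q^(Suc n))" by (simp add: Rn_def)
  have "Rn q x (Suc n) * Qt q (Suc n) = (Rn q x n * Qt q n) * ((1 - x/q^(Suc n)) * q^(Suc n))"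
    unfolding a Qt_Suc by (simp add: mult_ac)
  also have "(1 - x/q^(Suc n)) * q^(Suc n) = q^(Suc n) - x" using q0 by (simp add: field_simps)
  also have "(Rn q x n * Qt q n) * (q^(Suc n) - x) = (-x)^Suc n * P q (q/x) (Suc n)"
    unfolding Suc P_Suc using x0 by (simp add: field_simps)
  finally show ?case .
qed

definition TT :: "complex \<Rightarrow> complex \<Rightarrow> complex \<Rightarrow> complex \<Rightarrow> complex \<Rightarrow> complex \<Rightarrow> int \<Rightarrow> complex" where
  "TT q a b c d e k = qpoch (q/a) q k * qpoch (q/b) q k * qpoch (q/c) q k * qpoch (q/d) q k * qpoch (q/e) q k
     / (qpoch a q k * qpoch (b*q) q k * qpoch (c*q) q k * qpoch (d*q) q k * qpoch (e*q) q k)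
     * (a*b*c*d*e/q) powi k"

lemma TT_pos: "TT q a b c d e (int m) = P q (q/a) m * P q (q/b) m * P q (q/c) m * P q (q/d) m * P q (q/e) m
     / (P q a m * P q (b*q) m * P q (c*q) m * P q (d*q) m * P q (e*q) m) * (a*b*c*d*e/q)^m"
  by (simp add: TT_def qpoch_nat)

lemma powstuff:
  fixes a b c d e q :: complex
  assumes "a\<noteq>0" "b\<noteq>0" "c\<noteq>0" "d\<noteq>0" "e\<noteq>0" "q\<noteq>0"
  shows "((-a)^n*(-(b*q))^n*(-(c*q))^n*(-(d*q))^n*(-(e*q))^n)
     / ((-(q/a))^n*(-(q/b))^n*(-(q/c))^n*(-(q/d))^n*(-(q/e))^n * (a*b*c*d*e/q)^n) = (a*b*c*d*e)^n"
proof -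
  have "((-a)*(-(b*q))*(-(c*q))*(-(d*q))*(-(e*q))) / ((-(q/a))*(-(q/b))*(-(q/c))*(-(q/d))*(-(q/e))*(a*b*c*d*e/q))
      = a*b*c*d*e" using assms by (simp add: field_simps)
  then have "(((-a)*(-(b*q))*(-(c*q))*(-(d*q))*(-(e*q))) / ((-(q/a))*(-(q/b))*(-(q/c))*(-(q/d))*(-(q/e))*(a*b*c*d*e/q)))^n
      = (a*b*c*d*e)^n" by simp
  then show ?thesis by (simp only: power_divide power_mult_distrib)
qed

lemma TT_neg:
  assumes nz: "a\<noteq>0" "b\<noteq>0" "c\<noteq>0" "d\<noteq>0" "e\<noteq>0" "q\<noteq>0"
  shows "TT q a b c d e (- int n) = (a*b*c*d*e)^n * (P q (q/a) n * P q (1/b) n * P q (1/c) n * P q (1/d) n * P q (1/e) n)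
     / (P q a n * P q b n * P q c n * P q d n * P q e n)"
proof -
  define Qn where "Qn = Qt q n"
  have Q0: "Qn \<noteq> 0" unfolding Qn_def Qt_def using nz by simp
  have z0: "a*b*c*d*e/q \<noteq> 0" using nz by simp
  have "TT q a b c d e (- int n) = (Rn q a n * Rn q (b*q) n * Rn q (c*q) n * Rn q (d*q) n * Rn q (e*q) n)
       / (Rn q (q/a) n * Rn q (q/b) n * Rn q (q/c) n * Rn q (q/d) n * Rn q (q/e) n * (a*b*c*d*e/q)^n)"
    unfolding TT_def qpoch_neg Rn_def[symmetric] power_int_minus power_int_of_nat
    by (simp add: divide_inverse inverse_mult_distrib mult_ac)
  also have "\<dots> = ((Rn q a n*Qn) * (Rn q (b*q) n*Qn) * (Rn q (c*q) n*Qn) * (Rn q (d*q) n*Qn) * (Rn q (e*q) n*Qn))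
       / ((Rn q (q/a) n*Qn) * (Rn q (q/b) n*Qn) * (Rn q (q/c) n*Qn) * (Rn q (q/d) n*Qn) * (Rn q (q/e) n*Qn) * (a*b*c*d*e/q)^n)"
  proof -
    have "\<And>X Y. X / Y = (Qn^5 * X) / (Qn^5 * Y)" using Q0 by simp
    then show ?thesis by (simp add: mult_ac power_mult_distrib)
  qed
  also have "\<dots> = (((-a)^n*(-(b*q))^n*(-(c*q))^n*(-(d*q))^n*(-(e*q))^n)
     / ((-(q/a))^n*(-(q/b))^n*(-(q/c))^n*(-(q/d))^n*(-(q/e))^n * (a*b*c*d*e/q)^n))
     * ((P q (q/a) n * P q (q/(b*q)) n * P q (q/(c*q)) n * P q (q/(d*q)) n * P q (q/(e*q)) n)
       / (P q (q/(q/a)) n * P q (q/(q/b)) n * P q (q/(q/c)) n * P q (q/(q/d)) n * P q (q/(q/e)) n))"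
  proof -
    have r: "\<And>x. x \<noteq> 0 \<Longrightarrow> Rn q x n * Qn = (-x)^n * P q (q/x) n" using Rn_eq nz(6) by (simp add: Qn_def)
    have nz2: "b*q \<noteq> 0" "c*q \<noteq> 0" "d*q \<noteq> 0" "e*q \<noteq> 0" "q/a \<noteq> 0" "q/b \<noteq> 0" "q/c \<noteq> 0" "q/d \<noteq> 0" "q/e \<noteq> 0"
      using nz by simp_all
    show ?thesis unfolding r[OF nz(1)] r[OF nz2(1)] r[OF nz2(2)] r[OF nz2(3)] r[OF nz2(4)]
        r[OF nz2(5)] r[OF nz2(6)] r[OF nz2(7)] r[OF nz2(8)] r[OF nz2(9)]
      by (simp add: mult_ac)
  qed
  also have "\<dots> = (a*b*c*d*e)^n * (P q (q/a) n * P q (1/b) n * P q (1/c) n * P q (1/d) n * P q (1/e) n)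
     / (P q a n * P q b n * P q c n * P q d n * P q e n)"
    unfolding powstuff[OF nz] using nz by simp
  finally show ?thesis .
qed

lemma alg_V:
  fixes a b c d e q Qm A1 A2 A3 Ub Uc Ud Ue Db Dc Dd De Z :: complex
  assumes nz: "a\<noteq>0" "b\<noteq>0" "c\<noteq>0" "d\<noteq>0" "e\<noteq>0" "q\<noteq>0" "Qm\<noteq>0" "A2\<noteq>0" "A3\<noteq>0"
    "Db\<noteq>0" "Dc\<noteq>0" "Dd\<noteq>0" "De\<noteq>0" "1-a\<noteq>0" "1-a*Qm\<noteq>0" "1-b\<noteq>0" "1-c\<noteq>0" "1-d\<noteq>0" "1-e\<noteq>0"
    and rel: "A2*(1-a*Qm) = (1-a)*A3"
  shows "A1*Ub*Uc*Ud*Ue/(A2*Db*Dc*Dd*De)*(Z/Qm)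
     + Z*(a*b*c*d*e)*(A1*(1-q/a*Qm)*((1-1/b)*Ub)*((1-1/c)*Uc)*((1-1/d)*Ud)*((1-1/e)*Ue))
        /((A2*(1-a*Qm))*((1-b)*Db)*((1-c)*Dc)*((1-d)*Dd)*((1-e)*De))
   = (1-q*Qm^2)/(1-a)*(Z/Qm)*(A1/A3)*(Ub/Db)*(Uc/Dc)*(Ud/Dd)*(Ue/De)"
proof -
  define F where "F = A1*Ub*Uc*Ud*Ue/(Db*Dc*Dd*De)*Z"
  have s1: "(1-1/b)/(1-b) = -1/b" "(1-1/c)/(1-c) = -1/c" "(1-1/d)/(1-d) = -1/d" "(1-1/e)/(1-e) = -1/e"
    using nz by (simp_all add: field_simps)
  have "Z*(a*b*c*d*e)*(A1*(1-q/a*Qm)*((1-1/b)*Ub)*((1-1/c)*Uc)*((1-1/d)*Ud)*((1-1/e)*Ue))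
        /((A2*(1-a*Qm))*((1-b)*Db)*((1-c)*Dc)*((1-d)*Dd)*((1-e)*De))
      = F*(a*b*c*d*e)*(1-q/a*Qm)/(A2*(1-a*Qm)) * (((1-1/b)/(1-b))*((1-1/c)/(1-c))*((1-1/d)/(1-d))*((1-1/e)/(1-e)))"
    unfolding F_def by (simp add: mult_ac)
  also have "\<dots> = F*(a - q*Qm)/(A2*(1-a*Qm))"
    unfolding s1 using nz by (simp add: field_simps)
  also have "\<dots> = F*(a - q*Qm)/((1-a)*A3)" unfolding rel ..
  finally have L2: "Z*(a*b*c*d*e)*(A1*(1-q/a*Qm)*((1-1/b)*Ub)*((1-1/c)*Uc)*((1-1/d)*Ud)*((1-1/e)*Ue))
        /((A2*(1-a*Qm))*((1-b)*Db)*((1-c)*Dc)*((1-d)*Dd)*((1-e)*De)) = F*(a - q*Qm)/((1-a)*A3)" .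
  have L1: "A1*Ub*Uc*Ud*Ue/(A2*Db*Dc*Dd*De)*(Z/Qm) = F*(1-a*Qm)/(Qm*((1-a)*A3))"
  proof -
    have "A1*Ub*Uc*Ud*Ue/(A2*Db*Dc*Dd*De)*(Z/Qm) = F/(Qm*A2)" unfolding F_def by (simp add: mult_ac)
    also have "\<dots> = F*(1-a*Qm)/(Qm*(A2*(1-a*Qm)))" using nz by simp
    also have "\<dots> = F*(1-a*Qm)/(Qm*((1-a)*A3))" unfolding rel ..
    finally show ?thesis .
  qed
  have R: "(1-q*Qm^2)/(1-a)*(Z/Qm)*(A1/A3)*(Ub/Db)*(Uc/Dc)*(Ud/Dd)*(Ue/De) = F*(1-q*Qm^2)/(Qm*((1-a)*A3))"
    unfolding F_def by (simp add: mult_ac)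
  have gen: "\<And>D. D \<noteq> 0 \<Longrightarrow> F*(1-a*Qm)/(Qm*D) + F*(a-q*Qm)/D = F*(1-q*Qm^2)/(Qm*D)"
    using nz(7) by (simp add: field_simps power2_eq_square)
  have "(1-a)*A3 \<noteq> 0" using nz by simp
  then show ?thesis unfolding L1 L2 R by (rule gen)
qed

lemma TT_V:
  assumes nz: "a\<noteq>0" "b\<noteq>0" "c\<noteq>0" "d\<noteq>0" "e\<noteq>0" "q\<noteq>0"
    and n1: "1-a\<noteq>0" "1-b\<noteq>0" "1-c\<noteq>0" "1-d\<noteq>0" "1-e\<noteq>0" "1-a*q^m\<noteq>0"
    and pn: "P q a m \<noteq> 0" "P q (a*q) m \<noteq> 0" "P q (b*q) m \<noteq> 0" "P q (c*q) m \<noteq> 0" "P q (d*q) m \<noteq> 0" "P q (e*q) m \<noteq> 0"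
  shows "TT q a b c d e (int m) + TT q a b c d e (- int (Suc m))
    = (1-q^(2*m+1))/(1-a)*((a*b*c*d*e/q)^m)*(P q (q/a) m/P q (a*q) m)*(P q (q/b) m/P q (b*q) m)
      *(P q (q/c) m/P q (c*q) m)*(P q (q/d) m/P q (d*q) m)*(P q (q/e) m/P q (e*q) m)"
proof -
  have Q0: "q^m \<noteq> 0" using nz by simp
  have p1: "TT q a b c d e (int m) = P q (q/a) m * P q (q/b) m * P q (q/c) m * P q (q/d) m * P q (q/e) m
     / (P q a m * P q (b*q) m * P q (c*q) m * P q (d*q) m * P q (e*q) m) * ((a*b*c*d*e)^m / q^m)"
    unfolding TT_pos by (simp add: power_divide)
  have s1: "\<And>x. x \<noteq> 0 \<Longrightarrow> P q (1/x) (Suc m) = (1-1/x)*P q (q/x) m" by (simp add: P_Suc2)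
  have s2: "\<And>x. P q x (Suc m) = (1-x)*P q (x*q) m" by (simp add: P_Suc2)
  have p2: "TT q a b c d e (- int (Suc m)) = (a*b*c*d*e)^m*(a*b*c*d*e)*(P q (q/a) m*(1-q/a*q^m)*((1-1/b)*P q (q/b) m)
      *((1-1/c)*P q (q/c) m)*((1-1/d)*P q (q/d) m)*((1-1/e)*P q (q/e) m))
     / ((P q a m*(1-a*q^m))*((1-b)*P q (b*q) m)*((1-c)*P q (c*q) m)*((1-d)*P q (d*q) m)*((1-e)*P q (e*q) m))"
    unfolding TT_neg[OF nz] s1[OF nz(2)] s1[OF nz(3)] s1[OF nz(4)] s1[OF nz(5)] s2[of b] s2[of c] s2[of d] s2[of e]
    by (simp add: P_Suc)
  have rel: "P q a m*(1-a*q^m) = (1-a)*P q (a*q) m" using P_Suc[of q a m] P_Suc2[of q a m] by simp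
  have pw: "1-q^(2*m+1) = 1-q*(q^m)^2" by (simp add: power_mult power2_eq_square mult_ac flip: power_mult_distrib)
  show ?thesis unfolding p1 p2 pw power_divide
    by (rule alg_V[OF nz Q0 pn(1) pn(2) pn(3) pn(4) pn(5) pn(6) n1(1) n1(6) n1(2) n1(3) n1(4) n1(5) rel])
qed

lemma int_split_set:
  "{- int (Suc N)..int N} = int ` {..N} \<union> (\<lambda>m. - int (Suc m)) ` {..N}"
proof (rule set_eqI)
  fix k :: int
  show "k \<in> {- int (Suc N)..int N} \<longleftrightarrow> k \<in> int ` {..N} \<union> (\<lambda>m. - int (Suc m)) ` {..N}"
  proof
    assume k: "k \<in> {- int (Suc N)..int N}"
    show "k \<in> int ` {..N} \<union> (\<lambda>m. - int (Suc m)) ` {..N}"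
    proof (cases "0 \<le> k")
      case True
      then have "k = int (nat k)" "nat k \<in> {..N}" using k by auto
      then show ?thesis by blast
    next
      case False
      then have "k = - int (Suc (nat (-k) - 1))" "nat (-k) - 1 \<in> {..N}" using k by auto
      then show ?thesis by blast
    qed
  next
    assume "k \<in> int ` {..N} \<union> (\<lambda>m. - int (Suc m)) ` {..N}"
    then show "k \<in> {- int (Suc N)..int N}" by auto
  qed
qed

lemma sum_int_split:
  fixes f :: "int \<Rightarrow> complex"
  shows "(\<Sum>k\<in>{- int (Suc N)..int N}. f k) = (\<Sum>m\<le>N. f (int m) + f (- int (Suc m)))"
proof -
  have disj: "int ` {..N} \<inter> (\<lambda>m. - int (Suc m)) ` {..N} = {}" by auto
  have "(\<Sum>k\<in>{- int (Suc N)..int N}. f k) = (\<Sum>k\<in>int ` {..N}. f k) + (\<Sum>k\<in>(\<lambda>m. - int (Suc m)) ` {..N}. f k)"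
    unfolding int_split_set by (rule sum.union_disjoint) (use disj in auto)
  also have "\<dots> = (\<Sum>m\<le>N. f (int m)) + (\<Sum>m\<le>N. f (- int (Suc m)))"
    by (subst sum.reindex, simp add: inj_on_def, subst sum.reindex, simp add: inj_on_def, simp)
  finally show ?thesis by (simp add: sum.distrib)
qed

lemma TT_has_sum:
  assumes nz: "a\<noteq>0" "b\<noteq>0" "c\<noteq>0" "d\<noteq>0" "e\<noteq>0" "q\<noteq>0"
    and n1: "1-a\<noteq>0" "1-b\<noteq>0" "1-c\<noteq>0" "1-d\<noteq>0" "1-e\<noteq>0" "\<And>m. 1-a*q^m\<noteq>0"
    and pn: "\<And>m. P q a m \<noteq> 0" "\<And>m. P q (a*q) m \<noteq> 0" "\<And>m. P q (b*q) m \<noteq> 0" "\<And>m. P q (c*q) m \<noteq> 0"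
      "\<And>m. P q (d*q) m \<noteq> 0" "\<And>m. P q (e*q) m \<noteq> 0"
    and sup: "a = q^(Suc N) \<or> b = q^(Suc N) \<or> c = q^(Suc N)"
  shows "(TT q a b c d e has_sum (\<Sum>m\<le>N. (1-q^(2*m+1))/(1-a)*((a*b*c*d*e/q)^m)*(P q (q/a) m/P q (a*q) m)*(P q (q/b) m/P q (b*q) m)
      *(P q (q/c) m/P q (c*q) m)*(P q (q/d) m/P q (d*q) m)*(P q (q/e) m/P q (e*q) m))) UNIV"
proof (rule has_sum_finite_neutralI[where B="{- int (Suc N)..int N}"])
  have zpos: "TT q a b c d e (int m) = 0" if "N < m" for m
  proof -
    have "P q (q/a) m * P q (q/b) m * P q (q/c) m = 0"
      using sup
    proof (elim disjE)
      assume "a = q^(Suc N)"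
      then have "P q (q/a) m = 0" using nz that by (intro P_eq0[of _ q N]) (auto simp: field_simps)
      then show ?thesis by simp
    next
      assume "b = q^(Suc N)"
      then have "P q (q/b) m = 0" using nz that by (intro P_eq0[of _ q N]) (auto simp: field_simps)
      then show ?thesis by simp
    next
      assume "c = q^(Suc N)"
      then have "P q (q/c) m = 0" using nz that by (intro P_eq0[of _ q N]) (auto simp: field_simps)
      then show ?thesis by simp
    qed
    then show ?thesis unfolding TT_pos by simp
  qed
  have zneg: "TT q a b c d e (- int (Suc m)) = 0" if "N < m" for m
  proof -
    have "P q (q/a) (Suc m) * P q (1/b) (Suc m) * P q (1/c) (Suc m) = 0"
      using sup
    proof (elim disjE)
      assume "a = q^(Suc N)"
      then have "P q (q/a) (Suc m) = 0" using nz that by (intro P_eq0[of _ q N]) (auto simp: field_simps)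
      then show ?thesis by simp
    next
      assume "b = q^(Suc N)"
      then have "P q (1/b) (Suc m) = 0" using nz that by (intro P_eq0[of _ q "Suc N"]) (auto simp: field_simps)
      then show ?thesis by simp
    next
      assume "c = q^(Suc N)"
      then have "P q (1/c) (Suc m) = 0" using nz that by (intro P_eq0[of _ q "Suc N"]) (auto simp: field_simps)
      then show ?thesis by simp
    qed
    then show ?thesis unfolding TT_neg[OF nz] by simp
  qed
  show "finite {- int (Suc N)..int N}" by simp
  show "{- int (Suc N)..int N} \<subseteq> UNIV" by simp
  show "TT q a b c d e k = 0" if "k \<in> UNIV - {- int (Suc N)..int N}" for k
  proof (cases "0 \<le> k")
    case True
    then have "k = int (nat k)" "N < nat k" using that by auto
    then show ?thesis using zpos by metis
  next
    case False
    then have "k = - int (Suc (nat (-k) - 1))" "N < nat (-k) - 1" using that by auto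
    then show ?thesis using zneg by metis
  qed
  show "(\<Sum>m\<le>N. (1-q^(2*m+1))/(1-a)*((a*b*c*d*e/q)^m)*(P q (q/a) m/P q (a*q) m)*(P q (q/b) m/P q (b*q) m)
      *(P q (q/c) m/P q (c*q) m)*(P q (q/d) m/P q (d*q) m)*(P q (q/e) m/P q (e*q) m))
      = (\<Sum>k\<in>{- int (Suc N)..int N}. TT q a b c d e k)"
    unfolding sum_int_split
    by (rule sum.cong[OF refl], rule TT_V[symmetric]) (use nz n1 pn in auto)
qed

lemma qok_norm: "0 < norm q \<Longrightarrow> norm q < 1 \<Longrightarrow> qok q"
  unfolding qok_def
proof safe
  assume "0 < norm q" "norm q < 1"
  fix n :: nat assume n: "0 < n" "q^n = 1"
  have "norm (q^n) < 1" using n(1) \<open>norm q < 1\<close> by (simp add: norm_power power_less_one_iff)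
  then show False using n(2) by simp
qed (simp)

lemma final_parts:
  fixes S :: "nat \<Rightarrow> complex"
  assumes "(f has_sum L) UNIV" "L = X * (\<Sum>k\<le>N. S k)" "\<And>k. N < k \<Longrightarrow> S k = 0"
  shows "summable S \<and> (f has_sum (X * suminf S)) UNIV"
proof -
  have z: "\<And>k. k \<notin> {..N} \<Longrightarrow> S k = 0" using assms(3) by simp
  have "summable S" by (rule summable_finite[of "{..N}"]) (use z in auto)
  moreover have "suminf S = (\<Sum>k\<le>N. S k)" by (rule suminf_finite) (use z in auto)
  ultimately show ?thesis using assms(1,2) by simp
qed

lemma caseA:
  assumes nq: "0 < norm q" "norm q < 1"
    and nz: "a\<noteq>0" "b\<noteq>0" "c\<noteq>0" "d\<noteq>0" "e\<noteq>0"
    and aN: "a = q^(Suc N)"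
    and hb: "\<And>i. b*q^(Suc i) \<noteq> 1" and hc: "\<And>i. c*q^(Suc i) \<noteq> 1"
    and hd: "\<And>i. d*q^(Suc i) \<noteq> 1" and he: "\<And>i. e*q^(Suc i) \<noteq> 1"
    and n1: "b \<noteq> 1" "c \<noteq> 1" "d \<noteq> 1" "e \<noteq> 1"
    and h2: "\<And>i. (q^2/(a*b*c))*q^i \<noteq> 1" and hinf: "qpinf (a*b*c/q) q \<noteq> 0"
  shows "summable (\<lambda>k::nat.
            qpoch (q/a) q k * qpoch (q/b) q k * qpoch (q/c) q k * qpoch (d*e) q k
            / (qpoch q q k * qpoch (q^2/(a*b*c)) q k * qpoch (d*q) q k * qpoch (e*q) q k)
            * q ^ k)
       \<and> (TT q a b c d e has_sum
           (qpinf q q * qpinf (a*b) q * qpinf (b*c) q * qpinf (a*c) q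
            / (qpinf a q * qpinf (b*q) q * qpinf (c*q) q * qpinf (a*b*c/q) q)
            * (\<Sum>k::nat.
               qpoch (q/a) q k * qpoch (q/b) q k * qpoch (q/c) q k * qpoch (d*e) q k
               / (qpoch q q k * qpoch (q^2/(a*b*c)) q k * qpoch (d*q) q k * qpoch (e*q) q k)
               * q ^ k))) UNIV"
proof -
  have q: "qok q" by (rule qok_norm[OF nq])
  have q0: "q \<noteq> 0" using q by (rule qok_nz)
  define S where "S k = qpoch (q/a) q (int k) * qpoch (q/b) q (int k) * qpoch (q/c) q (int k) * qpoch (d*e) q (int k)
            / (qpoch q q (int k) * qpoch (q^2/(a*b*c)) q (int k) * qpoch (d*q) q (int k) * qpoch (e*q) q (int k))
            * q ^ k" for k
  have e1: "q/a = 1/q^N" using q0 by (simp add: aN)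
  have e2: "a*q = q^(N+2)" by (simp add: aN)
  have e4: "q^2/(a*b*c) = q/(q^N*b*c)" using q0 by (simp add: aN power2_eq_square field_simps)
  have hxy: "\<And>i. b*c*q^N \<noteq> q^(Suc i)"
  proof
    fix i assume h: "b*c*q^N = q^(Suc i)"
    have "(q^2/(a*b*c))*q^i = q/(q^N*b*c)*q^i" using e4 by simp
    also have "\<dots> = 1" using h q0 nz by (simp add: field_simps)
    finally show False using h2 by blast
  qed
  have Sform: "S k = P q (1/q^N) k * P q (q/b) k * P q (q/c) k * P q (d*e) k
              / (P q q k * P q (q/(q^N*b*c)) k * P q (d*q) k * P q (e*q) k) * q^k" for k
    unfolding S_def qpoch_nat e1 e4 ..
  have Sz: "S k = 0" if "N < k" for k
  proof -
    have "P q (1/q^N) k = 0" using that q0 by (intro P_eq0[of _ q N]) auto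
    then show ?thesis unfolding Sform by simp
  qed
  have a1: "1-a \<noteq> 0" using qok_pow[OF q, of "Suc N"] aN by simp
  have b1: "1-b\<noteq>0" "1-c\<noteq>0" "1-d\<noteq>0" "1-e\<noteq>0" using n1 by simp_all
  have am: "\<And>m. 1-a*q^m \<noteq> 0" using qok_pow[OF q] aN by (metis add_gr_0 power_add right_minus_eq zero_less_Suc)
  have pa: "\<And>m. P q a m \<noteq> 0" unfolding aN by (rule P_pow_nz[OF q]) simp
  have paq: "\<And>m. P q (a*q) m \<noteq> 0" unfolding e2 by (rule P_pow_nz[OF q]) simp
  have pxq: "P q (x*q) m \<noteq> 0" if hx: "\<And>i. x*q^(Suc i) \<noteq> 1" for x m
    by (rule P_nz) (use hx in \<open>simp add: mult.assoc flip: power_Suc\<close>)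
  note HS = TT_has_sum[OF nz q0 a1 b1 am pa paq pxq[OF hb] pxq[OF hc] pxq[OF hd] pxq[OF he], of N]
  have V: "(1-q^(2*m+1))/(1-a)*((a*b*c*d*e/q)^m)*(P q (q/a) m/P q (a*q) m)*(P q (q/b) m/P q (b*q) m)
      *(P q (q/c) m/P q (c*q) m)*(P q (q/d) m/P q (d*q) m)*(P q (q/e) m/P q (e*q) m)
    = 1/(1-a) * ((1-q^(2*m+1)) * (P q (1/q^N) m * q^(N*m) / P q (q^(N+2)) m)
            * (P q (q/b) m * P q (q/c) m * (b*c)^m / (P q (b*q) m * P q (c*q) m))
            * (P q (q/d) m * P q (q/e) m * (d*e)^m / (P q (d*q) m * P q (e*q) m)))" for m
  proof -
    have e3: "(a*b*c*d*e/q)^m = q^(N*m)*(b*c)^m*(d*e)^m"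
      using q0 by (simp add: aN power_mult_distrib power_mult mult_ac)
    show ?thesis unfolding e1 e2 e3 by (simp add: mult_ac)
  qed
  note W = watson[OF q nz(2) nz(3) nz(4) nz(5) hb hc hd he hxy]
  have L: "(\<Sum>m\<le>N. (1-q^(2*m+1))/(1-a)*((a*b*c*d*e/q)^m)*(P q (q/a) m/P q (a*q) m)*(P q (q/b) m/P q (b*q) m)
      *(P q (q/c) m/P q (c*q) m)*(P q (q/d) m/P q (d*q) m)*(P q (q/e) m/P q (e*q) m))
     = P q q (Suc N) / (1-a) * P q (b*c) N / (P q (b*q) N * P q (c*q) N) * (\<Sum>k\<le>N. S k)"
    unfolding V sum_distrib_left[symmetric] W Sform by (simp add: mult_ac)
  have X: "qpinf q q * qpinf (a*b) q * qpinf (b*c) q * qpinf (a*c) q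
            / (qpinf a q * qpinf (b*q) q * qpinf (c*q) q * qpinf (a*b*c/q) q)
        = P q q (Suc N) / (1-a) * P q (b*c) N / (P q (b*q) N * P q (c*q) N)"
  proof -
    have i1: "qpinf q q = P q q N * qpinf a q" using qpinf_shift[OF nq(2), of q N] by (simp add: aN)
    have i2: "qpinf (b*q) q = P q (b*q) N * qpinf (a*b) q" using qpinf_shift[OF nq(2), of "b*q" N] by (simp add: aN mult_ac)
    have i3: "qpinf (c*q) q = P q (c*q) N * qpinf (a*c) q" using qpinf_shift[OF nq(2), of "c*q" N] by (simp add: aN mult_ac)
    have i4: "qpinf (b*c) q = P q (b*c) N * qpinf (a*b*c/q) q"
    proof -
      have "b*c*q^N = a*b*c/q" using q0 by (simp add: aN field_simps)
      then show ?thesis using qpinf_shift[OF nq(2), of "b*c" N] by simp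
    qed
    have Qa: "qpinf a q \<noteq> 0" unfolding aN
      by (rule qpinf_nz[OF nq(2)]) (metis power_add qok_pow[OF q] zero_less_Suc add_gr_0)
    have Qab: "qpinf (a*b) q \<noteq> 0"
    proof (rule qpinf_nz[OF nq(2)])
      fix i have "a*b*q^i = b*q^(Suc (N+i))" by (simp add: aN power_add mult_ac)
      then show "a*b*q^i \<noteq> 1" using hb[of "N+i"] by metis
    qed
    have Qac: "qpinf (a*c) q \<noteq> 0"
    proof (rule qpinf_nz[OF nq(2)])
      fix i have "a*c*q^i = c*q^(Suc (N+i))" by (simp add: aN power_add mult_ac)
      then show "a*c*q^i \<noteq> 1" using hc[of "N+i"] by metis
    qed
    have PqN: "P q q (Suc N) / (1-a) = P q q N" using a1 by (simp add: P_Suc aN)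
    show ?thesis unfolding i1 i2 i3 i4 PqN using Qa Qab Qac hinf by (simp add: field_simps)
  qed
  have "summable S \<and> (TT q a b c d e has_sum (qpinf q q * qpinf (a*b) q * qpinf (b*c) q * qpinf (a*c) q
            / (qpinf a q * qpinf (b*q) q * qpinf (c*q) q * qpinf (a*b*c/q) q) * suminf S)) UNIV"
    by (rule final_parts[OF HS[OF disjI1[OF aN]] _ Sz]) (simp only: L X)
  then show ?thesis unfolding S_def by simp
qed

lemma caseB:
  assumes nq: "0 < norm q" "norm q < 1"
    and nz: "a\<noteq>0" "b\<noteq>0" "c\<noteq>0" "d\<noteq>0" "e\<noteq>0"
    and bN: "b = q^(Suc N)"
    and ha: "\<And>i. a*q^i \<noteq> 1" and hc: "\<And>i. c*q^(Suc i) \<noteq> 1"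
    and hd: "\<And>i. d*q^(Suc i) \<noteq> 1" and he: "\<And>i. e*q^(Suc i) \<noteq> 1"
    and n1: "c \<noteq> 1" "d \<noteq> 1" "e \<noteq> 1"
    and h2: "\<And>i. (q^2/(a*b*c))*q^i \<noteq> 1" and hinf: "qpinf (a*b*c/q) q \<noteq> 0"
  shows "summable (\<lambda>k::nat.
            qpoch (q/a) q k * qpoch (q/b) q k * qpoch (q/c) q k * qpoch (d*e) q k
            / (qpoch q q k * qpoch (q^2/(a*b*c)) q k * qpoch (d*q) q k * qpoch (e*q) q k)
            * q ^ k)
       \<and> (TT q a b c d e has_sum
           (qpinf q q * qpinf (a*b) q * qpinf (b*c) q * qpinf (a*c) q
            / (qpinf a q * qpinf (b*q) q * qpinf (c*q) q * qpinf (a*b*c/q) q)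
            * (\<Sum>k::nat.
               qpoch (q/a) q k * qpoch (q/b) q k * qpoch (q/c) q k * qpoch (d*e) q k
               / (qpoch q q k * qpoch (q^2/(a*b*c)) q k * qpoch (d*q) q k * qpoch (e*q) q k)
               * q ^ k))) UNIV"
proof -
  have q: "qok q" by (rule qok_norm[OF nq])
  have q0: "q \<noteq> 0" using q by (rule qok_nz)
  define S where "S k = qpoch (q/a) q (int k) * qpoch (q/b) q (int k) * qpoch (q/c) q (int k) * qpoch (d*e) q (int k)
            / (qpoch q q (int k) * qpoch (q^2/(a*b*c)) q (int k) * qpoch (d*q) q (int k) * qpoch (e*q) q (int k))
            * q ^ k" for k
  have e1: "q/b = 1/q^N" using q0 by (simp add: bN)
  have e2: "b*q = q^(N+2)" by (simp add: bN)
  have e4: "q^2/(a*b*c) = q/(q^N*a*c)" using q0 by (simp add: bN power2_eq_square field_simps)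
  have hxa: "\<And>i. a*q^(Suc i) \<noteq> 1" using ha by blast
  have hxy: "\<And>i. a*c*q^N \<noteq> q^(Suc i)"
  proof
    fix i assume h: "a*c*q^N = q^(Suc i)"
    have "(q^2/(a*b*c))*q^i = q/(q^N*a*c)*q^i" using e4 by simp
    also have "\<dots> = 1" using h q0 nz by (simp add: field_simps)
    finally show False using h2 by blast
  qed
  have Sform: "S k = P q (1/q^N) k * P q (q/a) k * P q (q/c) k * P q (d*e) k
              / (P q q k * P q (q/(q^N*a*c)) k * P q (d*q) k * P q (e*q) k) * q^k" for k
    unfolding S_def qpoch_nat e1 e4 by (simp add: mult_ac)
  have Sz: "S k = 0" if "N < k" for k
  proof -
    have "P q (1/q^N) k = 0" using that q0 by (intro P_eq0[of _ q N]) auto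
    then show ?thesis unfolding Sform by simp
  qed
  have a1: "1-a \<noteq> 0" using ha[of 0] by simp
  have b1: "1-b\<noteq>0" using qok_pow[OF q, of "Suc N"] bN by simp
  have c1: "1-c\<noteq>0" "1-d\<noteq>0" "1-e\<noteq>0" using n1 by simp_all
  have am: "\<And>m. 1-a*q^m \<noteq> 0" using ha by simp
  have pa: "\<And>m. P q a m \<noteq> 0" by (rule P_nz) (use ha in simp)
  have paq: "\<And>m. P q (a*q) m \<noteq> 0" by (rule P_nz) (use hxa in \<open>simp add: mult.assoc flip: power_Suc\<close>)
  have pbq: "\<And>m. P q (b*q) m \<noteq> 0" unfolding e2 by (rule P_pow_nz[OF q]) simp
  have pxq: "P q (x*q) m \<noteq> 0" if hx: "\<And>i. x*q^(Suc i) \<noteq> 1" for x m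
    by (rule P_nz) (use hx in \<open>simp add: mult.assoc flip: power_Suc\<close>)
  note HS = TT_has_sum[OF nz q0 a1 b1 c1 am pa paq pbq pxq[OF hc] pxq[OF hd] pxq[OF he], of N]
  have V: "(1-q^(2*m+1))/(1-a)*((a*b*c*d*e/q)^m)*(P q (q/a) m/P q (a*q) m)*(P q (q/b) m/P q (b*q) m)
      *(P q (q/c) m/P q (c*q) m)*(P q (q/d) m/P q (d*q) m)*(P q (q/e) m/P q (e*q) m)
    = 1/(1-a) * ((1-q^(2*m+1)) * (P q (1/q^N) m * q^(N*m) / P q (q^(N+2)) m)
            * (P q (q/a) m * P q (q/c) m * (a*c)^m / (P q (a*q) m * P q (c*q) m))
            * (P q (q/d) m * P q (q/e) m * (d*e)^m / (P q (d*q) m * P q (e*q) m)))" for m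
  proof -
    have e3: "(a*b*c*d*e/q)^m = q^(N*m)*(a*c)^m*(d*e)^m"
      using q0 by (simp add: bN power_mult_distrib power_mult mult_ac)
    show ?thesis unfolding e1 e2 e3 by (simp add: mult_ac)
  qed
  note W = watson[OF q nz(1) nz(3) nz(4) nz(5) hxa hc hd he hxy]
  have L: "(\<Sum>m\<le>N. (1-q^(2*m+1))/(1-a)*((a*b*c*d*e/q)^m)*(P q (q/a) m/P q (a*q) m)*(P q (q/b) m/P q (b*q) m)
      *(P q (q/c) m/P q (c*q) m)*(P q (q/d) m/P q (d*q) m)*(P q (q/e) m/P q (e*q) m))
     = P q q (Suc N) / (1-a) * P q (a*c) N / (P q (a*q) N * P q (c*q) N) * (\<Sum>k\<le>N. S k)"
    unfolding V sum_distrib_left[symmetric] W Sform by (simp add: mult_ac)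
  have X: "qpinf q q * qpinf (a*b) q * qpinf (b*c) q * qpinf (a*c) q
            / (qpinf a q * qpinf (b*q) q * qpinf (c*q) q * qpinf (a*b*c/q) q)
        = P q q (Suc N) / (1-a) * P q (a*c) N / (P q (a*q) N * P q (c*q) N)"
  proof -
    have i1: "qpinf q q = P q q (Suc N) * qpinf (b*q) q" using qpinf_shift[OF nq(2), of q "Suc N"] by (simp add: bN mult_ac)
    have i2: "qpinf a q = P q a (Suc N) * qpinf (a*b) q" using qpinf_shift[OF nq(2), of a "Suc N"] by (simp add: bN)
    have i3: "qpinf (c*q) q = P q (c*q) N * qpinf (b*c) q" using qpinf_shift[OF nq(2), of "c*q" N] by (simp add: bN mult_ac)
    have i4: "qpinf (a*c) q = P q (a*c) N * qpinf (a*b*c/q) q"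
    proof -
      have "a*c*q^N = a*b*c/q" using q0 by (simp add: bN field_simps)
      then show ?thesis using qpinf_shift[OF nq(2), of "a*c" N] by simp
    qed
    have Qbq: "qpinf (b*q) q \<noteq> 0" unfolding e2
      by (rule qpinf_nz[OF nq(2)]) (metis power_add qok_pow[OF q] zero_less_Suc add_gr_0 numeral_2_eq_2 add_Suc_right)
    have Qab: "qpinf (a*b) q \<noteq> 0"
    proof (rule qpinf_nz[OF nq(2)])
      fix i have "a*b*q^i = a*q^(Suc N+i)" by (simp add: bN power_add mult_ac)
      then show "a*b*q^i \<noteq> 1" using ha[of "Suc N+i"] by metis
    qed
    have Qbc: "qpinf (b*c) q \<noteq> 0"
    proof (rule qpinf_nz[OF nq(2)])
      fix i have "b*c*q^i = c*q^(Suc (N+i))" by (simp add: bN power_add mult_ac)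
      then show "b*c*q^i \<noteq> 1" using hc[of "N+i"] by metis
    qed
    have PaN: "P q a (Suc N) = (1-a) * P q (a*q) N" by (rule P_Suc2)
    have paqN: "P q (a*q) N \<noteq> 0" by (rule paq)
    have pcqN: "P q (c*q) N \<noteq> 0" by (rule pxq[OF hc])
    show ?thesis unfolding i1 i2 i3 i4 PaN using Qbq Qab Qbc hinf a1 paqN pcqN by (simp add: field_simps)
  qed
  have "summable S \<and> (TT q a b c d e has_sum (qpinf q q * qpinf (a*b) q * qpinf (b*c) q * qpinf (a*c) q
            / (qpinf a q * qpinf (b*q) q * qpinf (c*q) q * qpinf (a*b*c/q) q) * suminf S)) UNIV"
    by (rule final_parts[OF HS[OF disjI2[OF disjI1[OF bN]]] _ Sz]) (simp only: L X)
  then show ?thesis unfolding S_def by simp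
qed

theorem mainTheorem6:
  fixes q a b c d e :: complex
  assumes hq: "0 < norm q" "norm q < 1"
    and hnz: "a \<noteq> 0" "b \<noteq> 0" "c \<noteq> 0" "d \<noteq> 0" "e \<noteq> 0"
    and hqn: "\<exists>n::nat. 1 \<le> n \<and> (a = q ^ n \<or> b = q ^ n \<or> c = q ^ n)"
    and hnum: "\<forall>x\<in>{q/a, q/b, q/c, q/d, q/e}. \<forall>i::nat. 1 \<le> i \<longrightarrow> x / q ^ i \<noteq> 1"
    and hden: "\<forall>x\<in>{a, b*q, c*q, d*q, e*q}. \<forall>i::nat. x * q ^ i \<noteq> 1"
    and hden2: "\<forall>i::nat. (q^2 / (a*b*c)) * q ^ i \<noteq> 1"
    and hinf: "qpinf (a*b*c/q) q \<noteq> 0"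
  shows "summable (\<lambda>k::nat.
            qpoch (q/a) q k * qpoch (q/b) q k * qpoch (q/c) q k * qpoch (d*e) q k
            / (qpoch q q k * qpoch (q^2/(a*b*c)) q k * qpoch (d*q) q k * qpoch (e*q) q k)
            * q ^ k)
       \<and> ((\<lambda>k::int.
            qpoch (q/a) q k * qpoch (q/b) q k * qpoch (q/c) q k * qpoch (q/d) q k * qpoch (q/e) q k
            / (qpoch a q k * qpoch (b*q) q k * qpoch (c*q) q k * qpoch (d*q) q k * qpoch (e*q) q k)
            * (a*b*c*d*e/q) powi k)
          has_sum
           (qpinf q q * qpinf (a*b) q * qpinf (b*c) q * qpinf (a*c) q
            / (qpinf a q * qpinf (b*q) q * qpinf (c*q) q * qpinf (a*b*c/q) q)
            * (\<Sum>k::nat.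
               qpoch (q/a) q k * qpoch (q/b) q k * qpoch (q/c) q k * qpoch (d*e) q k
               / (qpoch q q k * qpoch (q^2/(a*b*c)) q k * qpoch (d*q) q k * qpoch (e*q) q k)
               * q ^ k))) UNIV"
proof -
  have q0: "q \<noteq> 0" using hq by auto
  have TTe: "(\<lambda>k::int.
            qpoch (q/a) q k * qpoch (q/b) q k * qpoch (q/c) q k * qpoch (q/d) q k * qpoch (q/e) q k
            / (qpoch a q k * qpoch (b*q) q k * qpoch (c*q) q k * qpoch (d*q) q k * qpoch (e*q) q k)
            * (a*b*c*d*e/q) powi k) = TT q a b c d e"
    by (rule ext) (simp add: TT_def)
  have ha: "\<And>i. a*q^i \<noteq> 1" using hden by simp
  have sh: "\<And>x i. (\<forall>i. x*q*q^i \<noteq> 1) \<Longrightarrow> x*q^(Suc i) \<noteq> 1" by (simp add: mult.assoc)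
  have hb: "\<And>i. b*q^(Suc i) \<noteq> 1" using hden by (intro sh) simp
  have hc: "\<And>i. c*q^(Suc i) \<noteq> 1" using hden by (intro sh) simp
  have hd: "\<And>i. d*q^(Suc i) \<noteq> 1" using hden by (intro sh) simp
  have he: "\<And>i. e*q^(Suc i) \<noteq> 1" using hden by (intro sh) simp
  have one: "x \<noteq> 1" if "x \<in> {a,b,c,d,e}" for x
  proof
    assume x1: "x = 1"
    have "q/x \<in> {q/a, q/b, q/c, q/d, q/e}" using that by auto
    then have "\<forall>i::nat. 1 \<le> i \<longrightarrow> (q/x) / q ^ i \<noteq> 1" using hnum by blast
    then have "(q/x) / q ^ 1 \<noteq> 1" by blast
    then show False using x1 q0 by simp
  qed
  have n1: "b \<noteq> 1" "c \<noteq> 1" "d \<noteq> 1" "e \<noteq> 1" using one by auto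
  have h2: "\<And>i. (q^2/(a*b*c))*q^i \<noteq> 1" using hden2 by blast
  from hqn obtain n where n: "1 \<le> n" "a = q^n \<or> b = q^n \<or> c = q^n" by blast
  define N where "N = n - 1"
  have nN: "n = Suc N" using n(1) by (simp add: N_def)
  from n(2) consider (A) "a = q^(Suc N)" | (B) "b = q^(Suc N)" | (C) "c = q^(Suc N)" unfolding nN by blast
  then show ?thesis
  proof cases
    case A
    show ?thesis unfolding TTe
      by (rule caseA[OF hq hnz A hb hc hd he n1 h2 hinf])
  next
    case B
    show ?thesis unfolding TTe
      by (rule caseB[OF hq hnz B ha hc hd he n1(2-4) h2 hinf])
  next
    case C
    have h2': "\<And>i. (q^2/(a*c*b))*q^i \<noteq> 1" using h2 by (simp add: mult_ac)
    have hinf': "qpinf (a*c*b/q) q \<noteq> 0" using hinf by (simp add: mult_ac)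
    note R = caseB[OF hq hnz(1) hnz(3) hnz(2) hnz(4) hnz(5) C ha hb hd he n1(1) n1(3) n1(4) h2' hinf']
    have t1: "TT q a c b d e = TT q a b c d e" by (rule ext) (simp add: TT_def mult_ac)
    have t2: "(\<lambda>k::nat. qpoch (q/a) q k * qpoch (q/c) q k * qpoch (q/b) q k * qpoch (d*e) q k
            / (qpoch q q k * qpoch (q^2/(a*c*b)) q k * qpoch (d*q) q k * qpoch (e*q) q k) * q ^ k)
        = (\<lambda>k::nat. qpoch (q/a) q k * qpoch (q/b) q k * qpoch (q/c) q k * qpoch (d*e) q k
            / (qpoch q q k * qpoch (q^2/(a*b*c)) q k * qpoch (d*q) q k * qpoch (e*q) q k) * q ^ k)"
      by (rule ext) (simp add: mult_ac)
    have t3: "qpinf q q * qpinf (a*c) q * qpinf (c*b) q * qpinf (a*b) q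
            / (qpinf a q * qpinf (c*q) q * qpinf (b*q) q * qpinf (a*c*b/q) q)
          = qpinf q q * qpinf (a*b) q * qpinf (b*c) q * qpinf (a*c) q
            / (qpinf a q * qpinf (b*q) q * qpinf (c*q) q * qpinf (a*b*c/q) q)"
      by (simp add: mult_ac)
    show ?thesis unfolding TTe using R unfolding t1 t2 t3 .
  qed
qed

end
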